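(* For every $X\subseteq\mathbb N$ and $\alpha\in(71/72,1]$, the algebra $\mathcal D_{\mathcal K}(X,\alpha)$ is an almost masa of $\mathcal A_0(X)$.
   Context: Fix an orthonormal basis $(e_k)$ of $\ell_2$; $H_n=\mathrm{span}\{e_{2n},e_{2n+1}\}$. $\mathcal A_0$ is the set of $T\in\mathcal B(\ell_2)$ with $\langle Te_k,e_m\rangle\ne0\Rightarrow\{k,m\}\subseteq\{2n,2n+1\}$ for some $n$, written $T=(T_n)$, $T_n\in\mathcal B(H_n)$ the restriction; $\mathcal A_0(X)=\{T\in\mathcal A_0:T_n=0\ \forall n\notin X\}$. For $\alpha\in(71/72,1]$, $f_{\alpha,2n}=\alpha e_{2n}+\sqrt{1-\alpha^2}e_{2n+1}$, $f_{\alpha,2n+1}=\sqrt{1-\alpha^2}e_{2n}-\alpha e_{2n+1}$; $\mathcal D(X,\alpha)$ is the set of $T\in\mathcal A_0(X)$ with $T_n$ diagonal in $\{f_{\alpha,2n},f_{\alpha,2n+1}\}$ for all $n\in X$; $\mathcal D_{\mathcal K}(X,\alpha)=\{S+R:S\in\mathcal D(X,\alpha),R\in\mathcal K(\ell_2)\cap\mathcal A_0(X)\}$. $S,T$ almost commute if $ST-TS$ is compact; an almost masa of a C*-algebra $\mathcal C\subseteq\mathcal B(\ell_2)$ is a C*-subalgebra of $\mathcal C$ maximal under inclusion among C*-subalgebras of $\mathcal C$ whose elements pairwise almost commute. *)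

theory Defs
  imports Complex_Main
begin

definition l2 :: "(nat \<Rightarrow> complex) set" where
  "l2 = {x. summable (\<lambda>k. (cmod (x k))^2)}"

definition l2norm :: "(nat \<Rightarrow> complex) \<Rightarrow> real" where
  "l2norm x = sqrt (\<Sum>k. (cmod (x k))^2)"

definition l2inner :: "(nat \<Rightarrow> complex) \<Rightarrow> (nat \<Rightarrow> complex) \<Rightarrow> complex" where
  "l2inner x y = (\<Sum>k. x k * cnj (y k))"

definition ebasis :: "nat \<Rightarrow> nat \<Rightarrow> complex" where
  "ebasis k = (\<lambda>m. if m = k then 1 else 0)"

text \<open>Bounded linear operators on l2; canonically extended by 0 outside l2.\<close>
definition bop :: "((nat \<Rightarrow> complex) \<Rightarrow> (nat \<Rightarrow> complex)) \<Rightarrow> bool" where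
  "bop T \<longleftrightarrow>
     (\<forall>x\<in>l2. T x \<in> l2) \<and>
     (\<forall>x\<in>l2. \<forall>y\<in>l2. \<forall>a b. T (\<lambda>k. a * x k + b * y k) = (\<lambda>k. a * T x k + b * T y k)) \<and>
     (\<exists>C. \<forall>x\<in>l2. l2norm (T x) \<le> C * l2norm x) \<and>
     (\<forall>x. x \<notin> l2 \<longrightarrow> T x = (\<lambda>k. 0))"

definition opnorm :: "((nat \<Rightarrow> complex) \<Rightarrow> (nat \<Rightarrow> complex)) \<Rightarrow> real" where
  "opnorm T = Sup {l2norm (T x) | x. x \<in> l2 \<and> l2norm x \<le> 1}"

definition op_add :: "((nat \<Rightarrow> complex) \<Rightarrow> (nat \<Rightarrow> complex)) \<Rightarrow> ((nat \<Rightarrow> complex) \<Rightarrow> (nat \<Rightarrow> complex)) \<Rightarrow> ((nat \<Rightarrow> complex) \<Rightarrow> (nat \<Rightarrow> complex))" where "op_add S T = (\<lambda>x k. S x k + T x k)"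
definition op_diff :: "((nat \<Rightarrow> complex) \<Rightarrow> (nat \<Rightarrow> complex)) \<Rightarrow> ((nat \<Rightarrow> complex) \<Rightarrow> (nat \<Rightarrow> complex)) \<Rightarrow> ((nat \<Rightarrow> complex) \<Rightarrow> (nat \<Rightarrow> complex))" where "op_diff S T = (\<lambda>x k. S x k - T x k)"
definition op_smult :: "complex \<Rightarrow> ((nat \<Rightarrow> complex) \<Rightarrow> (nat \<Rightarrow> complex)) \<Rightarrow> ((nat \<Rightarrow> complex) \<Rightarrow> (nat \<Rightarrow> complex))" where "op_smult c T = (\<lambda>x k. c * T x k)"

definition compact_op :: "((nat \<Rightarrow> complex) \<Rightarrow> (nat \<Rightarrow> complex)) \<Rightarrow> bool" where
  "compact_op T \<longleftrightarrow> bop T \<and>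
     (\<forall>xs :: nat \<Rightarrow> nat \<Rightarrow> complex. (\<forall>n. xs n \<in> l2) \<and> (\<exists>B. \<forall>n. l2norm (xs n) \<le> B) \<longrightarrow>
        (\<exists>(r :: nat \<Rightarrow> nat) y. strict_mono r \<and> y \<in> l2 \<and>
           (\<lambda>n. l2norm (\<lambda>k. T (xs (r n)) k - y k)) \<longlonglongrightarrow> 0))"

definition is_adjoint :: "((nat \<Rightarrow> complex) \<Rightarrow> (nat \<Rightarrow> complex)) \<Rightarrow> ((nat \<Rightarrow> complex) \<Rightarrow> (nat \<Rightarrow> complex)) \<Rightarrow> bool" where
  "is_adjoint T S \<longleftrightarrow> bop S \<and> (\<forall>x\<in>l2. \<forall>y\<in>l2. l2inner (T x) y = l2inner x (S y))"

definition cstar_subalg :: "((nat \<Rightarrow> complex) \<Rightarrow> (nat \<Rightarrow> complex)) set \<Rightarrow> bool" where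
  "cstar_subalg A \<longleftrightarrow>
     A \<subseteq> Collect bop \<and> (\<lambda>x k. 0) \<in> A \<and>
     (\<forall>S\<in>A. \<forall>T\<in>A. op_add S T \<in> A) \<and>
     (\<forall>c. \<forall>T\<in>A. op_smult c T \<in> A) \<and>
     (\<forall>S\<in>A. \<forall>T\<in>A. S \<circ> T \<in> A) \<and>
     (\<forall>T\<in>A. \<exists>S\<in>A. is_adjoint T S) \<and>
     (\<forall>Ts T. (\<forall>n. Ts n \<in> A) \<and> bop T \<and> (\<lambda>n. opnorm (op_diff (Ts n) T)) \<longlonglongrightarrow> 0 \<longrightarrow> T \<in> A)"

definition almost_commute :: "((nat \<Rightarrow> complex) \<Rightarrow> (nat \<Rightarrow> complex)) \<Rightarrow> ((nat \<Rightarrow> complex) \<Rightarrow> (nat \<Rightarrow> complex)) \<Rightarrow> bool" where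
  "almost_commute S T \<longleftrightarrow> compact_op (op_diff (S \<circ> T) (T \<circ> S))"

definition almost_commutative :: "((nat \<Rightarrow> complex) \<Rightarrow> (nat \<Rightarrow> complex)) set \<Rightarrow> bool" where
  "almost_commutative A \<longleftrightarrow> (\<forall>S\<in>A. \<forall>T\<in>A. almost_commute S T)"

definition almost_masa :: "((nat \<Rightarrow> complex) \<Rightarrow> (nat \<Rightarrow> complex)) set \<Rightarrow> ((nat \<Rightarrow> complex) \<Rightarrow> (nat \<Rightarrow> complex)) set \<Rightarrow> bool" where
  "almost_masa C A \<longleftrightarrow> cstar_subalg A \<and> A \<subseteq> C \<and> almost_commutative A \<and>
     (\<forall>B. cstar_subalg B \<and> almost_commutative B \<and> A \<subseteq> B \<and> B \<subseteq> C \<longrightarrow> B = A)"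

text \<open>A_0(X): block diagonal w.r.t. H_n = span{e_2n, e_2n+1}, with T_n = 0 for n not in X.\<close>
definition A0 :: "nat set \<Rightarrow> ((nat \<Rightarrow> complex) \<Rightarrow> (nat \<Rightarrow> complex)) set" where
  "A0 X = {T. bop T \<and> (\<forall>k m. T (ebasis k) m \<noteq> 0 \<longrightarrow>
                 (\<exists>n\<in>X. k \<in> {2*n, 2*n+1} \<and> m \<in> {2*n, 2*n+1}))}"

definition fvec :: "real \<Rightarrow> nat \<Rightarrow> nat \<Rightarrow> complex" where
  "fvec \<alpha> j = (let n = j div 2 in
     if even j then (\<lambda>m. complex_of_real \<alpha> * ebasis (2*n) m + complex_of_real (sqrt (1 - \<alpha>^2)) * ebasis (2*n+1) m)
     else (\<lambda>m. complex_of_real (sqrt (1 - \<alpha>^2)) * ebasis (2*n) m - complex_of_real \<alpha> * ebasis (2*n+1) m))"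

definition Dset :: "nat set \<Rightarrow> real \<Rightarrow> ((nat \<Rightarrow> complex) \<Rightarrow> (nat \<Rightarrow> complex)) set" where
  "Dset X \<alpha> = {T \<in> A0 X. \<forall>n\<in>X.
      (\<exists>c. T (fvec \<alpha> (2*n)) = (\<lambda>m. c * fvec \<alpha> (2*n) m)) \<and>
      (\<exists>c. T (fvec \<alpha> (2*n+1)) = (\<lambda>m. c * fvec \<alpha> (2*n+1) m))}"

definition DK :: "nat set \<Rightarrow> real \<Rightarrow> ((nat \<Rightarrow> complex) \<Rightarrow> (nat \<Rightarrow> complex)) set" where
  "DK X \<alpha> = {op_add S R | S R. S \<in> Dset X \<alpha> \<and> R \<in> A0 X \<and> compact_op R}"

end

theory Submission
  imports Defs "HOL-Analysis.Analysis" "HOL-Library.Diagonal_Subsequence"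
begin


type_synonym vec = "nat \<Rightarrow> complex"
type_synonym opr = "vec \<Rightarrow> vec"

lemma sq_sum_le: "(cmod (u + v))^2 \<le> 2 * (cmod u)^2 + 2 * (cmod v)^2"
proof -
  have "cmod (u+v) \<le> cmod u + cmod v" by (rule norm_triangle_ineq)
  hence "(cmod (u+v))^2 \<le> (cmod u + cmod v)^2" by (simp add: power_mono)
  also have "\<dots> \<le> 2 * (cmod u)^2 + 2 * (cmod v)^2"
    by (smt (verit) sum_squares_bound zero_le_power2 power2_sum)
  finally show ?thesis .
qed

lemma l2_zero[simp]: "(\<lambda>k. 0) \<in> l2"
  by (simp add: l2_def)

lemma l2_lin:
  assumes "x \<in> l2" "y \<in> l2"
  shows "(\<lambda>k. a * x k + b * y k) \<in> l2"
proof -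
  have sx: "summable (\<lambda>k. (cmod (x k))^2)" and sy: "summable (\<lambda>k. (cmod (y k))^2)"
    using assms by (auto simp: l2_def)
  have "summable (\<lambda>k. 2 * (cmod a)^2 * (cmod (x k))^2 + 2 * (cmod b)^2 * (cmod (y k))^2)"
    using sx sy by (intro summable_add summable_mult) 
  moreover have "norm ((cmod (a * x k + b * y k))^2) \<le> 2 * (cmod a)^2 * (cmod (x k))^2 + 2 * (cmod b)^2 * (cmod (y k))^2" for k
    using sq_sum_le[of "a * x k" "b * y k"] by (simp add: norm_mult power_mult_distrib)
  ultimately show ?thesis unfolding l2_def
    by (auto intro: summable_comparison_test[where g="\<lambda>k. 2 * (cmod a)^2 * (cmod (x k))^2 + 2 * (cmod b)^2 * (cmod (y k))^2"])
qed

lemma l2_add: "x \<in> l2 \<Longrightarrow> y \<in> l2 \<Longrightarrow> (\<lambda>k. x k + y k) \<in> l2"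
proof -
  assume a: "x \<in> l2" "y \<in> l2"
  have "(\<lambda>k. x k + y k) = (\<lambda>k. 1 * x k + 1 * y k)" by simp
  thus ?thesis using l2_lin[OF a, of 1 1] by metis
qed
lemma l2_diff: "x \<in> l2 \<Longrightarrow> y \<in> l2 \<Longrightarrow> (\<lambda>k. x k - y k) \<in> l2"
proof -
  assume a: "x \<in> l2" "y \<in> l2"
  have "(\<lambda>k. x k - y k) = (\<lambda>k. 1 * x k + (-1) * y k)" by simp
  thus ?thesis using l2_lin[OF a, of 1 "-1"] by metis
qed
lemma l2_scale: "x \<in> l2 \<Longrightarrow> (\<lambda>k. c * x k) \<in> l2"
proof -
  assume a: "x \<in> l2"
  have "(\<lambda>k. c * x k) = (\<lambda>k. c * x k + 0 * x k)" by simp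
  thus ?thesis using l2_lin[OF a a, of c 0] by metis
qed

lemma l2_finite:
  assumes "\<And>k. k \<ge> N \<Longrightarrow> x k = 0" shows "x \<in> l2"
  unfolding l2_def mem_Collect_eq
  apply (rule summable_finite[of "{..<N}"]) using assms by (simp_all add: not_less)

lemma ebasis_l2[simp]: "ebasis k \<in> l2"
  by (rule l2_finite[of "Suc k"]) (auto simp: ebasis_def)

lemma l2norm_nonneg: "x \<in> l2 \<Longrightarrow> l2norm x \<ge> 0"
  unfolding l2norm_def l2_def by (auto intro!: real_sqrt_ge_zero suminf_nonneg)

lemma l2norm_sq: "x \<in> l2 \<Longrightarrow> (l2norm x)^2 = (\<Sum>k. (cmod (x k))^2)"
  unfolding l2norm_def l2_def by (auto intro!: real_sqrt_pow2 suminf_nonneg)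

lemma ebasis_norm[simp]: "l2norm (ebasis k) = 1"
proof -
  have "(\<lambda>m. (cmod (ebasis k m))^2) = (\<lambda>m. if m = k then 1 else 0)"
    by (auto simp: ebasis_def)
  moreover have "(\<lambda>m. if m = k then (1::real) else 0) sums 1"
    using sums_single[of k "\<lambda>_. (1::real)"] by simp
  ultimately show ?thesis unfolding l2norm_def by (simp add: sums_iff)
qed

lemma coord_le:
  assumes "x \<in> l2" shows "cmod (x m) \<le> l2norm x"
proof -
  have s: "summable (\<lambda>k. (cmod (x k))^2)" using assms by (simp add: l2_def)
  have "(cmod (x m))^2 \<le> (\<Sum>k. (cmod (x k))^2)"
    using sum_le_suminf[OF s, of "{m}"] by simp
  hence "sqrt ((cmod (x m))^2) \<le> l2norm x" unfolding l2norm_def by (rule real_sqrt_le_mono)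
  thus ?thesis by simp
qed

lemma l2norm_scale:
  assumes "x \<in> l2" shows "l2norm (\<lambda>k. c * x k) = cmod c * l2norm x"
proof -
  have s: "summable (\<lambda>k. (cmod (x k))^2)" using assms by (simp add: l2_def)
  have "(\<Sum>k. (cmod (c * x k))^2) = (cmod c)^2 * (\<Sum>k. (cmod (x k))^2)"
    using s by (simp add: norm_mult power_mult_distrib suminf_mult)
  thus ?thesis unfolding l2norm_def by (simp add: real_sqrt_mult)
qed

lemma l2norm_le_sum:
  assumes "summable (\<lambda>k. (cmod (x k))^2)"
  shows "l2norm x \<le> sqrt (\<Sum>k. (cmod (x k))^2)" unfolding l2norm_def by simp

lemma l2norm_diff_le:
  assumes "x \<in> l2" "y \<in> l2"
  shows "l2norm (\<lambda>k. x k - y k) \<le> 2 * (l2norm x + l2norm y)"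
proof -
  have sx: "summable (\<lambda>k. (cmod (x k))^2)" and sy: "summable (\<lambda>k. (cmod (y k))^2)"
    using assms by (auto simp: l2_def)
  have sd: "summable (\<lambda>k. (cmod (x k - y k))^2)" using l2_diff[OF assms] by (simp add: l2_def)
  have "(\<Sum>k. (cmod (x k - y k))^2) \<le> (\<Sum>k. 2 * (cmod (x k))^2 + 2 * (cmod (y k))^2)"
    using sd sx sy sq_sum_le[of "x k" "- y k" for k]
    by (intro suminf_le) (auto intro!: summable_add summable_mult)
  also have "\<dots> = 2 * (l2norm x)^2 + 2 * (l2norm y)^2"
    using sx sy assms by (simp add: l2norm_sq suminf_add[symmetric] suminf_mult)
  also have "\<dots> \<le> (2 * (l2norm x + l2norm y))^2"
    using l2norm_nonneg[OF assms(1)] l2norm_nonneg[OF assms(2)] by (simp add: power2_eq_square algebra_simps)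
  finally have "(l2norm (\<lambda>k. x k - y k))^2 \<le> (2 * (l2norm x + l2norm y))^2"
    by (simp add: l2norm_sq l2_diff[OF assms])
  thus ?thesis using l2norm_nonneg[OF assms(1)] l2norm_nonneg[OF assms(2)]
    by (meson abs_le_square_iff abs_of_nonneg dual_order.trans abs_ge_self power2_le_imp_le add_nonneg_nonneg mult_nonneg_nonneg zero_le_numeral)
qed

definition tl2 :: "nat \<Rightarrow> vec \<Rightarrow> vec" where
  "tl2 N x = (\<lambda>k. if k < N then 0 else x k)"

lemma tl2_l2: "x \<in> l2 \<Longrightarrow> tl2 N x \<in> l2"
proof -
  assume "x \<in> l2"
  hence "summable (\<lambda>k. (cmod (x k))^2)" by (simp add: l2_def)
  hence "summable (\<lambda>k. (cmod (tl2 N x k))^2)"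
    by (rule summable_comparison_test'[where N=0]) (auto simp: tl2_def)
  thus ?thesis by (simp add: l2_def)
qed

lemma tl2_tendsto:
  assumes "x \<in> l2" shows "(\<lambda>N. l2norm (tl2 N x)) \<longlonglongrightarrow> 0"
proof -
  define f where "f = (\<lambda>k. (cmod (x k))^2)"
  have s: "summable f" using assms by (simp add: l2_def f_def)
  have eq: "(\<Sum>k. (cmod (tl2 N x k))^2) = suminf f - (\<Sum>k<N. f k)" for N
  proof -
    have a: "(\<lambda>k. if k < N then f k else 0) sums (\<Sum>k<N. f k)"
      using sums_If_finite_set[of "{..<N}" f] by simp
    have "(\<lambda>k. f k - (if k < N then f k else 0)) sums (suminf f - (\<Sum>k<N. f k))"
      using sums_diff[OF summable_sums[OF s] a] .
    moreover have "(\<lambda>k. f k - (if k < N then f k else 0)) = (\<lambda>k. (cmod (tl2 N x k))^2)"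
      by (auto simp: tl2_def f_def)
    ultimately show ?thesis by (simp add: sums_iff)
  qed
  have "(\<lambda>N. suminf f - (\<Sum>k<N. f k)) \<longlonglongrightarrow> suminf f - suminf f"
    by (intro tendsto_diff tendsto_const summable_LIMSEQ s)
  hence "(\<lambda>N. sqrt (suminf f - (\<Sum>k<N. f k))) \<longlonglongrightarrow> sqrt 0"
    by (intro tendsto_real_sqrt) simp
  thus ?thesis unfolding l2norm_def eq by simp
qed


lemma bopD:
  assumes "bop T"
  shows "\<And>x. x \<in> l2 \<Longrightarrow> T x \<in> l2"
    and "\<And>x y a b. x \<in> l2 \<Longrightarrow> y \<in> l2 \<Longrightarrow> T (\<lambda>k. a * x k + b * y k) = (\<lambda>k. a * T x k + b * T y k)"
    and "\<And>x. x \<notin> l2 \<Longrightarrow> T x = (\<lambda>k. 0)"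
  using assms unfolding bop_def by blast+

lemma bop_bound:
  assumes "bop T" obtains C where "C \<ge> 0" "\<And>x. x \<in> l2 \<Longrightarrow> l2norm (T x) \<le> C * l2norm x"
proof -
  obtain C where C: "\<And>x. x \<in> l2 \<Longrightarrow> l2norm (T x) \<le> C * l2norm x" using assms unfolding bop_def by blast
  have "0 \<le> l2norm (T (ebasis 0))" using bopD(1)[OF assms] by (simp add: l2norm_nonneg)
  also have "\<dots> \<le> C" using C[of "ebasis 0"] by simp
  finally show ?thesis using that C by blast
qed

lemma bop_scale:
  assumes "bop T" "x \<in> l2" shows "T (\<lambda>k. c * x k) = (\<lambda>k. c * T x k)"
proof -
  have "T (\<lambda>k. c * x k + 0 * x k) = (\<lambda>k. c * T x k + 0 * T x k)" using bopD(2)[OF assms(1) assms(2) assms(2)] by blast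
  thus ?thesis by simp
qed

definition bk :: "nat \<Rightarrow> nat" where "bk m = 2 * (m div 2)"

lemma bk_simps[simp]: "bk (2*n) = 2*n" "bk (Suc (2*n)) = 2*n" "bk (bk m) = bk m" "bk (Suc (bk m)) = bk m"
  unfolding bk_def by simp_all
lemma bk_eq_iff: "k div 2 = m div 2 \<longleftrightarrow> k = bk m \<or> k = Suc (bk m)"
proof
  assume "k div 2 = m div 2"
  moreover have "k = 2 * (k div 2) + k mod 2" by simp
  moreover have "k mod 2 = 0 \<or> k mod 2 = 1" by auto
  ultimately show "k = bk m \<or> k = Suc (bk m)" unfolding bk_def by (metis Suc_eq_plus1 add.right_neutral)
qed (auto simp: bk_def)

definition ent :: "opr \<Rightarrow> nat \<Rightarrow> nat \<Rightarrow> complex" where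
  "ent T m k = T (ebasis k) m"

lemma tl2_step: "tl2 N x = (\<lambda>k. x N * ebasis N k + 1 * tl2 (Suc N) x k)"
  by (auto simp: tl2_def ebasis_def fun_eq_iff less_Suc_eq)

lemma expansion:
  assumes "bop T" "x \<in> l2"
  shows "T x m = (\<Sum>k<N. x k * T (ebasis k) m) + T (tl2 N x) m"
proof (induction N)
  case 0 thus ?case by (simp add: tl2_def)
next
  case (Suc N)
  have "T (tl2 N x) = T (\<lambda>k. x N * ebasis N k + 1 * tl2 (Suc N) x k)" by (subst tl2_step) simp
  also have "\<dots> = (\<lambda>k. x N * T (ebasis N) k + 1 * T (tl2 (Suc N) x) k)"
    by (rule bopD(2)[OF assms(1)]) (auto intro: tl2_l2 assms)
  finally show ?case using Suc by simp
qed

lemma repr: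
  assumes "bop T" "\<And>k m. T (ebasis k) m \<noteq> 0 \<Longrightarrow> m div 2 = k div 2" "x \<in> l2"
  shows "T x m = ent T m (bk m) * x (bk m) + ent T m (Suc (bk m)) * x (Suc (bk m))"
proof -
  obtain C where C0: "C \<ge> 0" and C: "\<And>x. x \<in> l2 \<Longrightarrow> l2norm (T x) \<le> C * l2norm x"
    using bop_bound[OF assms(1)] by blast
  define bs where "bs = ent T m (bk m) * x (bk m) + ent T m (Suc (bk m)) * x (Suc (bk m))"
  have sumeq: "(\<Sum>k<N. x k * T (ebasis k) m) = bs" if "N \<ge> Suc (Suc (bk m))" for N
  proof -
    have "(\<Sum>k<N. x k * T (ebasis k) m) = (\<Sum>k\<in>{bk m, Suc (bk m)}. x k * T (ebasis k) m)"
    proof (rule sum.mono_neutral_right)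
      show "\<forall>i\<in>{..<N} - {bk m, Suc (bk m)}. x i * T (ebasis i) m = 0"
      proof
        fix i assume "i \<in> {..<N} - {bk m, Suc (bk m)}"
        hence "i div 2 \<noteq> m div 2" using bk_eq_iff[of i m] by auto
        hence "T (ebasis i) m = 0" using assms(2)[of i m] by metis
        thus "x i * T (ebasis i) m = 0" by simp
      qed
    qed (use that in auto)
    thus ?thesis by (simp add: bs_def ent_def mult.commute)
  qed
  have le: "cmod (T x m - bs) \<le> C * l2norm (tl2 N x)" if "N \<ge> Suc (Suc (bk m))" for N
  proof -
    have "T x m - bs = T (tl2 N x) m" using expansion[OF assms(1,3), of m N] sumeq[OF that] by simp
    also have "cmod \<dots> \<le> l2norm (T (tl2 N x))" by (rule coord_le) (auto intro: bopD(1)[OF assms(1)] tl2_l2 assms)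
    also have "\<dots> \<le> C * l2norm (tl2 N x)" by (rule C) (auto intro: tl2_l2 assms)
    finally show ?thesis .
  qed
  have "(\<lambda>N. C * l2norm (tl2 N x)) \<longlonglongrightarrow> C * 0"
    by (intro tendsto_mult tendsto_const tl2_tendsto assms)
  hence "cmod (T x m - bs) \<le> C * 0"
    by (rule LIMSEQ_le_const) (use le in blast)
  thus ?thesis by (simp add: bs_def)
qed

definition blk :: "(nat \<Rightarrow> nat \<Rightarrow> complex) \<Rightarrow> opr" where
  "blk t x = (if x \<in> l2 then (\<lambda>m. t m (bk m) * x (bk m) + t m (Suc (bk m)) * x (Suc (bk m))) else (\<lambda>m. 0))"

lemma A0_blk:
  assumes "T \<in> A0 X" shows "T = blk (ent T)"
proof (rule ext)
  fix x
  have b: "bop T" using assms by (simp add: A0_def)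
  have s: "m div 2 = k div 2" if "T (ebasis k) m \<noteq> 0" for k m
  proof -
    have "\<exists>n\<in>X. k \<in> {2*n, 2*n+1} \<and> m \<in> {2*n, 2*n+1}" using assms that by (simp add: A0_def)
    then obtain n where "k \<in> {2*n, 2*n+1}" "m \<in> {2*n, 2*n+1}" by blast
    thus ?thesis by auto
  qed
  show "T x = blk (ent T) x"
  proof (cases "x \<in> l2")
    case True thus ?thesis using repr[OF b s True] by (auto simp: blk_def)
  next
    case False thus ?thesis using bopD(3)[OF b False] by (simp add: blk_def)
  qed
qed

lemma ent_bound:
  assumes "bop T" obtains K where "K \<ge> 0" "\<And>m k. cmod (ent T m k) \<le> K"
proof -
  obtain C where C0: "C \<ge> 0" and C: "\<And>x. x \<in> l2 \<Longrightarrow> l2norm (T x) \<le> C * l2norm x"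
    using bop_bound[OF assms(1)] by blast
  have "cmod (ent T m k) \<le> C" for m k
  proof -
    have "cmod (ent T m k) \<le> l2norm (T (ebasis k))" unfolding ent_def
      by (rule coord_le) (auto intro: bopD(1)[OF assms])
    also have "\<dots> \<le> C" using C[of "ebasis k"] by simp
    finally show ?thesis .
  qed
  thus ?thesis using that C0 by blast
qed

definition G :: "vec \<Rightarrow> nat \<Rightarrow> real" where
  "G x m = (cmod (x (bk m)))^2 + (cmod (x (Suc (bk m))))^2"

lemma G_nonneg: "G x m \<ge> 0" by (simp add: G_def)

lemma G_sum2: "(\<Sum>m<2*N. G x m) = 2 * (\<Sum>k<2*N. (cmod (x k))^2)"
proof (induction N)
  case 0 thus ?case by simp
next
  case (Suc N)
  have e: "2 * Suc N = Suc (Suc (2*N))" by simp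
  have "bk (Suc (2*N)) = 2*N" by simp
  thus ?case using Suc unfolding e by (simp add: G_def)
qed

lemma G_sum_le:
  assumes "x \<in> l2" "finite A" shows "(\<Sum>m\<in>A. G x m) \<le> 2 * (l2norm x)^2"
proof -
  have s: "summable (\<lambda>k. (cmod (x k))^2)" using assms by (simp add: l2_def)
  obtain n where n: "A \<subseteq> {..<n}" using assms(2) finite_nat_iff_bounded by blast
  have "(\<Sum>m\<in>A. G x m) \<le> (\<Sum>m<2*n. G x m)"
    using n by (intro sum_mono2) (auto simp: G_nonneg)
  also have "\<dots> = 2 * (\<Sum>k<2*n. (cmod (x k))^2)" by (rule G_sum2)
  also have "\<dots> \<le> 2 * (\<Sum>k. (cmod (x k))^2)"
    using sum_le_suminf[OF s, of "{..<2*n}"] by simp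
  finally show ?thesis using l2norm_sq[OF assms(1)] by simp
qed

lemma G_summable: "x \<in> l2 \<Longrightarrow> summable (G x)"
  by (rule summableI_nonneg_bounded[where x="2 * (l2norm x)^2"]) (auto simp: G_nonneg G_sum_le)

lemma G_suminf: "x \<in> l2 \<Longrightarrow> suminf (G x) \<le> 2 * (l2norm x)^2"
  by (rule suminf_le_const) (auto simp: G_sum_le G_summable)

lemma blk_pt_le:
  assumes "\<And>j. cmod (t m j) \<le> K" "K \<ge> 0"
  shows "(cmod (t m (bk m) * x (bk m) + t m (Suc (bk m)) * x (Suc (bk m))))^2 \<le> 2 * K^2 * G x m"
proof -
  have a: "(cmod (t m j * x j))^2 \<le> K^2 * (cmod (x j))^2" for j
  proof -
    have "(cmod (t m j))^2 \<le> K^2" using assms(1)[of j] by (intro power_mono) auto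
    hence "(cmod (t m j))^2 * (cmod (x j))^2 \<le> K^2 * (cmod (x j))^2" by (rule mult_right_mono) simp
    thus ?thesis by (simp add: norm_mult power_mult_distrib)
  qed
  have "(cmod (t m (bk m) * x (bk m) + t m (Suc (bk m)) * x (Suc (bk m))))^2
     \<le> 2 * (cmod (t m (bk m) * x (bk m)))^2 + 2 * (cmod (t m (Suc (bk m)) * x (Suc (bk m))))^2"
    by (rule sq_sum_le)
  also have "\<dots> \<le> 2 * (K^2 * (cmod (x (bk m)))^2) + 2 * (K^2 * (cmod (x (Suc (bk m))))^2)"
    using a[of "bk m"] a[of "Suc (bk m)"] by linarith
  also have "\<dots> = 2 * K^2 * G x m" unfolding G_def by (simp add: distrib_left)
  finally show ?thesis .
qed

definition tbounded :: "(nat \<Rightarrow> nat \<Rightarrow> complex) \<Rightarrow> real \<Rightarrow> bool" where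
  "tbounded t K \<longleftrightarrow> K \<ge> 0 \<and> (\<forall>m k. cmod (t m k) \<le> K)"

lemma blk_l2:
  assumes "tbounded t K" "x \<in> l2"
  shows "blk t x \<in> l2" "l2norm (blk t x) \<le> 2 * K * l2norm x"
proof -
  have K: "K \<ge> 0" "\<And>m k. cmod (t m k) \<le> K" using assms(1) unfolding tbounded_def by auto
  have pt0: "(cmod (blk t x m))^2 \<le> 2 * K^2 * G x m" for m
    using blk_pt_le[where t=t and m=m and K=K and x=x, OF K(2) K(1)] assms(2) unfolding blk_def by simp
  have pt: "norm ((cmod (blk t x m))^2) \<le> 2 * K^2 * G x m" for m
    using pt0[of m] by simp
  have sG: "summable (\<lambda>m. 2 * K^2 * G x m)" using G_summable[OF assms(2)] by (rule summable_mult)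
  have s: "summable (\<lambda>m. (cmod (blk t x m))^2)"
    by (rule summable_comparison_test[OF _ sG]) (use pt in blast)
  thus bl: "blk t x \<in> l2" unfolding l2_def by simp
  have "(\<Sum>m. (cmod (blk t x m))^2) \<le> (\<Sum>m. 2 * K^2 * G x m)"
    by (rule suminf_le[OF pt0 s sG])
  also have "\<dots> = 2 * K^2 * suminf (G x)" using G_summable[OF assms(2)] by (rule suminf_mult)
  also have "\<dots> \<le> 2 * K^2 * (2 * (l2norm x)^2)" using G_suminf[OF assms(2)] by (intro mult_left_mono) auto
  also have "\<dots> = (2 * K * l2norm x)^2" by (simp add: power_mult_distrib)
  finally have "(l2norm (blk t x))^2 \<le> (2 * K * l2norm x)^2" using l2norm_sq[OF bl] by simp
  moreover have "0 \<le> 2 * K * l2norm x" using K l2norm_nonneg[OF assms(2)] by simp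
  ultimately show "l2norm (blk t x) \<le> 2 * K * l2norm x"
    by (rule power2_le_imp_le)
qed

lemma blk_lin:
  assumes "x \<in> l2" "y \<in> l2"
  shows "blk t (\<lambda>k. a * x k + b * y k) = (\<lambda>k. a * blk t x k + b * blk t y k)"
proof -
  have "(\<lambda>k. a * x k + b * y k) \<in> l2" using l2_lin[OF assms] .
  hence "blk t (\<lambda>k. a * x k + b * y k) = (\<lambda>m. t m (bk m) * (a * x (bk m) + b * y (bk m)) + t m (Suc (bk m)) * (a * x (Suc (bk m)) + b * y (Suc (bk m))))"
    by (simp add: blk_def)
  also have "\<dots> = (\<lambda>k. a * blk t x k + b * blk t y k)"
    using assms by (simp add: blk_def fun_eq_iff ring_distribs)
  finally show ?thesis .
qed

lemma blk_bop: assumes "tbounded t K" shows "bop (blk t)"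
  unfolding bop_def
proof (intro conjI ballI allI impI)
  show "\<And>x. x \<in> l2 \<Longrightarrow> blk t x \<in> l2" using blk_l2(1)[OF assms] .
  show "\<And>x y a b. x \<in> l2 \<Longrightarrow> y \<in> l2 \<Longrightarrow> blk t (\<lambda>k. a * x k + b * y k) = (\<lambda>k. a * blk t x k + b * blk t y k)"
    by (rule blk_lin)
  show "\<exists>C. \<forall>x\<in>l2. l2norm (blk t x) \<le> C * l2norm x" using blk_l2(2)[OF assms] by blast
  show "\<And>x. x \<notin> l2 \<Longrightarrow> blk t x = (\<lambda>k. 0)" by (simp add: blk_def)
qed

lemma ent_blk: "ent (blk t) m k = (if k div 2 = m div 2 then t m k else 0)"
  unfolding ent_def blk_def bk_eq_iff
  apply (simp only: ebasis_l2 if_True)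
  by (auto simp: ebasis_def)

definition bsupp :: "nat set \<Rightarrow> (nat \<Rightarrow> nat \<Rightarrow> complex) \<Rightarrow> bool" where
  "bsupp X t \<longleftrightarrow> (\<forall>m k. t m k \<noteq> 0 \<longrightarrow> m div 2 = k div 2 \<and> m div 2 \<in> X)"

lemma blk_A0: "tbounded t K \<Longrightarrow> bsupp X t \<Longrightarrow> blk t \<in> A0 X"
  unfolding A0_def
proof (safe)
  assume "tbounded t K" thus "bop (blk t)" by (rule blk_bop)
next
  fix k m assume b: "bsupp X t" and ne: "blk t (ebasis k) m \<noteq> 0"
  hence "t m k \<noteq> 0" "k div 2 = m div 2" using ent_blk[of t m k] by (auto simp: ent_def split: if_splits)
  with b have "m div 2 \<in> X" "k div 2 = m div 2" unfolding bsupp_def by blast+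
  moreover have "m = bk m \<or> m = Suc (bk m)" using bk_eq_iff[of m m] by simp
  ultimately have "k \<in> {bk m, Suc (bk m)}" "m \<in> {bk m, Suc (bk m)}" using bk_eq_iff[of k m] by auto
  thus "\<exists>n\<in>X. k \<in> {2 * n, 2 * n + 1} \<and> m \<in> {2 * n, 2 * n + 1}"
    using \<open>m div 2 \<in> X\<close> unfolding bk_def by (intro bexI[of _ "m div 2"]) auto
qed

lemma A0_ent:
  assumes "T \<in> A0 X" shows "bsupp X (ent T)" "\<exists>K. tbounded (ent T) K"
proof -
  show "bsupp X (ent T)" unfolding bsupp_def
  proof (intro allI impI)
    fix m k assume "ent T m k \<noteq> 0"
    then obtain n where "n \<in> X" "k \<in> {2*n, 2*n+1}" "m \<in> {2*n, 2*n+1}" using assms unfolding A0_def ent_def by blast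
    thus "m div 2 = k div 2 \<and> m div 2 \<in> X" by auto
  qed
  have "bop T" using assms by (simp add: A0_def)
  thus "\<exists>K. tbounded (ent T) K" using ent_bound unfolding tbounded_def by metis
qed


definition tadd :: "(nat \<Rightarrow> nat \<Rightarrow> complex) \<Rightarrow> (nat \<Rightarrow> nat \<Rightarrow> complex) \<Rightarrow> nat \<Rightarrow> nat \<Rightarrow> complex" where
  "tadd s t = (\<lambda>m k. s m k + t m k)"
definition tdiff :: "(nat \<Rightarrow> nat \<Rightarrow> complex) \<Rightarrow> (nat \<Rightarrow> nat \<Rightarrow> complex) \<Rightarrow> nat \<Rightarrow> nat \<Rightarrow> complex" where
  "tdiff s t = (\<lambda>m k. s m k - t m k)"
definition tsc :: "complex \<Rightarrow> (nat \<Rightarrow> nat \<Rightarrow> complex) \<Rightarrow> nat \<Rightarrow> nat \<Rightarrow> complex" where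
  "tsc c t = (\<lambda>m k. c * t m k)"
definition tmul :: "(nat \<Rightarrow> nat \<Rightarrow> complex) \<Rightarrow> (nat \<Rightarrow> nat \<Rightarrow> complex) \<Rightarrow> nat \<Rightarrow> nat \<Rightarrow> complex" where
  "tmul s t = (\<lambda>m k. s m (bk m) * t (bk m) k + s m (Suc (bk m)) * t (Suc (bk m)) k)"
definition tadj :: "(nat \<Rightarrow> nat \<Rightarrow> complex) \<Rightarrow> nat \<Rightarrow> nat \<Rightarrow> complex" where
  "tadj t = (\<lambda>m k. cnj (t k m))"

lemma tb_add: "tbounded s K1 \<Longrightarrow> tbounded t K2 \<Longrightarrow> tbounded (tadd s t) (K1 + K2)"
  unfolding tbounded_def tadd_def by (meson add_mono norm_triangle_le add_nonneg_nonneg)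
lemma tb_diff: "tbounded s K1 \<Longrightarrow> tbounded t K2 \<Longrightarrow> tbounded (tdiff s t) (K1 + K2)"
  unfolding tbounded_def tdiff_def by (meson add_mono norm_triangle_le_diff add_nonneg_nonneg)
lemma tb_sc: "tbounded t K \<Longrightarrow> tbounded (tsc c t) (cmod c * K)"
  unfolding tbounded_def tsc_def by (auto simp: norm_mult intro: mult_left_mono)
lemma tb_adj: "tbounded t K \<Longrightarrow> tbounded (tadj t) K"
  unfolding tbounded_def tadj_def by auto
lemma tb_mul: assumes "tbounded s K1" "tbounded t K2" shows "tbounded (tmul s t) (2 * (K1 * K2))"
proof -
  have a: "cmod (s m j * t j' k) \<le> K1 * K2" for m j j' k
    using assms unfolding tbounded_def by (auto simp: norm_mult intro: mult_mono)
  have "cmod (tmul s t m k) \<le> K1 * K2 + K1 * K2" for m k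
    unfolding tmul_def by (rule order.trans[OF norm_triangle_ineq add_mono[OF a a]])
  thus ?thesis using assms unfolding tbounded_def by auto
qed

lemma blk_add: "op_add (blk s) (blk t) = blk (tadd s t)"
  unfolding op_add_def blk_def tadd_def fun_eq_iff by (simp add: ring_distribs)
lemma blk_diff: "op_diff (blk s) (blk t) = blk (tdiff s t)"
  unfolding op_diff_def blk_def tdiff_def fun_eq_iff by (simp add: left_diff_distrib)
lemma blk_sc: "op_smult c (blk t) = blk (tsc c t)"
  unfolding op_smult_def blk_def tsc_def fun_eq_iff by (simp add: ring_distribs)
lemma blk_comp: assumes "tbounded t K" shows "blk s \<circ> blk t = blk (tmul s t)"
proof (rule ext)
  fix x show "(blk s \<circ> blk t) x = blk (tmul s t) x"
  proof (cases "x \<in> l2")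
    case True
    hence bt: "blk t x \<in> l2" using blk_l2[OF assms] by blast
    have "blk s (blk t x) m = blk (tmul s t) x m" for m
    proof -
      have "blk s (blk t x) m = s m (bk m) * blk t x (bk m) + s m (Suc (bk m)) * blk t x (Suc (bk m))"
        using bt by (simp add: blk_def)
      also have "\<dots> = s m (bk m) * (t (bk m) (bk m) * x (bk m) + t (bk m) (Suc (bk m)) * x (Suc (bk m)))
          + s m (Suc (bk m)) * (t (Suc (bk m)) (bk m) * x (bk m) + t (Suc (bk m)) (Suc (bk m)) * x (Suc (bk m)))"
        using True by (simp add: blk_def)
      also have "\<dots> = blk (tmul s t) x m"
        using True unfolding blk_def tmul_def by (simp add: ring_distribs)
      finally show ?thesis .
    qed
    thus ?thesis by (simp add: fun_eq_iff)
  next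
    case False thus ?thesis by (simp add: blk_def)
  qed
qed

lemma bsupp_iff: "bsupp X t \<longleftrightarrow> (\<forall>m k. \<not> (m div 2 = k div 2 \<and> m div 2 \<in> X) \<longrightarrow> t m k = 0)"
  unfolding bsupp_def by blast

lemma bk_div[simp]: "bk m div 2 = m div 2" "Suc (bk m) div 2 = m div 2"
  using bk_eq_iff[of "bk m" m] bk_eq_iff[of "Suc (bk m)" m] by simp_all

lemma bsupp_add: "bsupp X s \<Longrightarrow> bsupp X t \<Longrightarrow> bsupp X (tadd s t)"
  unfolding bsupp_iff tadd_def by simp
lemma bsupp_diff: "bsupp X s \<Longrightarrow> bsupp X t \<Longrightarrow> bsupp X (tdiff s t)"
  unfolding bsupp_iff tdiff_def by simp
lemma bsupp_sc: "bsupp X t \<Longrightarrow> bsupp X (tsc c t)"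
  unfolding bsupp_iff tsc_def by simp
lemma bsupp_adj: "bsupp X t \<Longrightarrow> bsupp X (tadj t)"
  unfolding bsupp_iff tadj_def by (metis complex_cnj_zero)
lemma bsupp_mul: assumes "bsupp X s" "bsupp X t" shows "bsupp X (tmul s t)"
  unfolding bsupp_iff
proof (intro allI impI)
  fix m k assume h: "\<not> (m div 2 = k div 2 \<and> m div 2 \<in> X)"
  show "tmul s t m k = 0"
  proof (cases "m div 2 \<in> X")
    case False
    hence "s m (bk m) = 0" "s m (Suc (bk m)) = 0" using assms(1) unfolding bsupp_iff by simp_all
    thus ?thesis by (simp add: tmul_def)
  next
    case True
    hence "m div 2 \<noteq> k div 2" using h by blast
    hence "t (bk m) k = 0" "t (Suc (bk m)) k = 0" using assms(2) unfolding bsupp_iff by simp_all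
    thus ?thesis by (simp add: tmul_def)
  qed
qed

lemma l2_inner_summable:
  assumes "u \<in> l2" "v \<in> l2" shows "summable (\<lambda>k. u k * cnj (v k))"
proof -
  have su: "summable (\<lambda>k. (cmod (u k))^2)" and sv: "summable (\<lambda>k. (cmod (v k))^2)"
    using assms by (auto simp: l2_def)
  have nb: "norm (u k * cnj (v k)) \<le> (cmod (u k))^2 + (cmod (v k))^2" for k
  proof -
    have "cmod (u k) * cmod (v k) \<le> (cmod (u k))^2 + (cmod (v k))^2"
      using sum_squares_bound[of "cmod (u k)" "cmod (v k)"] mult_nonneg_nonneg[OF norm_ge_zero[of "u k"] norm_ge_zero[of "v k"]]
      by linarith
    thus ?thesis by (simp add: norm_mult)
  qed
  have sg: "summable (\<lambda>k. (cmod (u k))^2 + (cmod (v k))^2)" using su sv by (rule summable_add)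
  show ?thesis by (rule summable_comparison_test'[OF sg, of 0]) (rule nb)
qed

lemma bk_simps2[simp]: "bk (n*2) = n*2" "bk (Suc (n*2)) = n*2"
  unfolding bk_def by simp_all

lemma sum_pair: "sum f {n*2..<n*2+2} = f (n*2) + f (Suc (n*2))"
proof -
  have "{n*2..<n*2+2} = {n*2, Suc (n*2)}" by auto
  thus ?thesis by simp
qed

lemma l2inner_group:
  assumes "u \<in> l2" "v \<in> l2"
  shows "l2inner u v = (\<Sum>n. u (n*2) * cnj (v (n*2)) + u (Suc (n*2)) * cnj (v (Suc (n*2))))"
proof -
  have "(\<lambda>k. u k * cnj (v k)) sums l2inner u v"
    unfolding l2inner_def using l2_inner_summable[OF assms] by (rule summable_sums)
  from sums_group[OF this, of 2]
  have "(\<lambda>n. u (n*2) * cnj (v (n*2)) + u (Suc (n*2)) * cnj (v (Suc (n*2)))) sums l2inner u v"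
    by (simp only: sum_pair)
  thus ?thesis by (simp add: sums_iff)
qed

lemma blk_adjoint: assumes "tbounded t K" shows "is_adjoint (blk t) (blk (tadj t))"
  unfolding is_adjoint_def
proof (intro conjI ballI)
  show "bop (blk (tadj t))" using blk_bop tb_adj[OF assms] by blast
  fix x y assume x: "x \<in> l2" and y: "y \<in> l2"
  have bx: "blk t x \<in> l2" and byy: "blk (tadj t) y \<in> l2"
    using blk_l2(1) assms tb_adj[OF assms] x y by blast+
  show "l2inner (blk t x) y = l2inner x (blk (tadj t) y)"
    unfolding l2inner_group[OF bx y] l2inner_group[OF x byy]
  proof (rule suminf_cong)
    fix n
    show "blk t x (n * 2) * cnj (y (n * 2)) + blk t x (Suc (n * 2)) * cnj (y (Suc (n * 2))) =
         x (n * 2) * cnj (blk (tadj t) y (n * 2)) + x (Suc (n * 2)) * cnj (blk (tadj t) y (Suc (n * 2)))"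
    proof -
      have e1: "blk t x (n*2) = t (n*2) (n*2) * x (n*2) + t (n*2) (Suc (n*2)) * x (Suc (n*2))"
        "blk t x (Suc (n*2)) = t (Suc (n*2)) (n*2) * x (n*2) + t (Suc (n*2)) (Suc (n*2)) * x (Suc (n*2))"
        "blk (tadj t) y (n*2) = cnj (t (n*2) (n*2)) * y (n*2) + cnj (t (Suc (n*2)) (n*2)) * y (Suc (n*2))"
        "blk (tadj t) y (Suc (n*2)) = cnj (t (n*2) (Suc (n*2))) * y (n*2) + cnj (t (Suc (n*2)) (Suc (n*2))) * y (Suc (n*2))"
        using x y unfolding blk_def tadj_def by simp_all
      show ?thesis unfolding e1 by (simp only: complex_cnj_add complex_cnj_mult complex_cnj_cnj) algebra
    qed
  qed
qed


definition tz :: "(nat \<Rightarrow> nat \<Rightarrow> complex) \<Rightarrow> bool" where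
  "tz t \<longleftrightarrow> (\<forall>e>0. \<exists>N. \<forall>m\<ge>N. \<forall>k. k div 2 = m div 2 \<longrightarrow> cmod (t m k) < e)"

lemma l2_conv_pt:
  assumes "\<And>n. z n \<in> l2" "y \<in> l2" "(\<lambda>n. l2norm (\<lambda>k. z n k - y k)) \<longlonglongrightarrow> 0"
  shows "(\<lambda>n. z n m) \<longlonglongrightarrow> y m"
proof -
  have "(\<lambda>n. z n m - y m) \<longlonglongrightarrow> 0"
  proof (rule Lim_null_comparison[OF _ assms(3)])
    show "\<forall>\<^sub>F n in sequentially. norm (z n m - y m) \<le> l2norm (\<lambda>k. z n k - y k)"
      using coord_le[OF l2_diff[OF assms(1) assms(2)]] by simp
  qed
  hence "(\<lambda>n. (z n m - y m) + y m) \<longlonglongrightarrow> 0 + y m" by (intro tendsto_add tendsto_const)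
  thus ?thesis by simp
qed

lemma ent_blk': "blk t (ebasis k) m = (if k div 2 = m div 2 then t m k else 0)"
  using ent_blk[of t m k] by (simp add: ent_def)

lemma comp_tz:
  assumes tb: "tbounded t K" and c: "compact_op (blk t)" shows "tz t"
proof (rule ccontr)
  assume "\<not> tz t"
  then obtain e where e: "e > 0" and h: "\<forall>N. \<exists>m\<ge>N. \<exists>k. k div 2 = m div 2 \<and> cmod (t m k) \<ge> e"
    unfolding tz_def by (auto simp: not_less)
  then obtain mm kk where mk: "\<And>N. mm N \<ge> N" "\<And>N. kk N div 2 = mm N div 2" "\<And>N. cmod (t (mm N) (kk N)) \<ge> e"
    by metis
  define xs where "xs = (\<lambda>N. ebasis (kk N))"
  have "(\<forall>n. xs n \<in> l2) \<and> (\<exists>B. \<forall>n. l2norm (xs n) \<le> B)" by (auto simp: xs_def)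
  then obtain r y where r: "strict_mono r" and y: "y \<in> l2"
    and lim: "(\<lambda>n. l2norm (\<lambda>k. blk t (xs (r n)) k - y k)) \<longlonglongrightarrow> 0"
    using c unfolding compact_op_def by blast
  define z where "z = (\<lambda>n. blk t (xs (r n)))"
  have zl2: "z n \<in> l2" for n unfolding z_def xs_def using blk_l2(1)[OF tb] by simp
  have y0: "y m = 0" for m
  proof -
    have l1: "(\<lambda>n. z n m) \<longlonglongrightarrow> y m" using l2_conv_pt[OF zl2 y] lim unfolding z_def by simp
    have "eventually (\<lambda>n. z n m = 0) sequentially"
      unfolding eventually_sequentially
    proof (intro exI allI impI)
      fix n assume n: "n \<ge> Suc (Suc m)"
      have "r n \<ge> n" using r by (rule seq_suble)
      hence "mm (r n) \<ge> Suc (Suc m)" using mk(1)[of "r n"] n by linarith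
      hence "mm (r n) div 2 \<noteq> m div 2" by linarith
      thus "z n m = 0" unfolding z_def xs_def ent_blk' using mk(2) by simp
    qed
    hence "(\<lambda>n. z n m) \<longlonglongrightarrow> 0" by (rule tendsto_eventually)
    thus ?thesis using l1 LIMSEQ_unique by metis
  qed
  hence "y = (\<lambda>k. 0)" by auto
  hence lim2: "(\<lambda>n. l2norm (z n)) \<longlonglongrightarrow> 0" using lim unfolding z_def by simp
  have "e \<le> l2norm (z n)" for n
  proof -
    have "z n (mm (r n)) = t (mm (r n)) (kk (r n))" unfolding z_def xs_def ent_blk' using mk(2) by simp
    hence "e \<le> cmod (z n (mm (r n)))" using mk(3) by simp
    also have "\<dots> \<le> l2norm (z n)" by (rule coord_le[OF zl2])
    finally show ?thesis .
  qed
  hence "e \<le> 0" using lim2 by (intro LIMSEQ_le_const[OF lim2]) auto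
  thus False using e by simp
qed

lemma blk_pt_le2:
  assumes "cmod (t m (bk m)) \<le> K" "cmod (t m (Suc (bk m))) \<le> K" "K \<ge> 0"
  shows "(cmod (t m (bk m) * x (bk m) + t m (Suc (bk m)) * x (Suc (bk m))))^2 \<le> 2 * K^2 * G x m"
proof -
  have a: "(cmod (t m j * x j))^2 \<le> K^2 * (cmod (x j))^2" if "cmod (t m j) \<le> K" for j
  proof -
    have "(cmod (t m j))^2 \<le> K^2" using that by (intro power_mono) auto
    hence "(cmod (t m j))^2 * (cmod (x j))^2 \<le> K^2 * (cmod (x j))^2" by (rule mult_right_mono) simp
    thus ?thesis by (simp add: norm_mult power_mult_distrib)
  qed
  have "(cmod (t m (bk m) * x (bk m) + t m (Suc (bk m)) * x (Suc (bk m))))^2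
     \<le> 2 * (cmod (t m (bk m) * x (bk m)))^2 + 2 * (cmod (t m (Suc (bk m)) * x (Suc (bk m))))^2"
    by (rule sq_sum_le)
  also have "\<dots> \<le> 2 * (K^2 * (cmod (x (bk m)))^2) + 2 * (K^2 * (cmod (x (Suc (bk m))))^2)"
    using a[OF assms(1)] a[OF assms(2)] by linarith
  also have "\<dots> = 2 * K^2 * G x m" unfolding G_def by (simp add: distrib_left)
  finally show ?thesis .
qed

lemma sum_split_le:
  fixes f :: "nat \<Rightarrow> real"
  assumes "\<And>m. f m \<ge> 0"
  shows "(\<Sum>m<L. f m) \<le> (\<Sum>m<N. f m) + (\<Sum>m\<in>{N..<L}. f m)"
proof -
  have "(\<Sum>m<L. f m) \<le> (\<Sum>m\<in>{..<N} \<union> {N..<L}. f m)"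
    by (rule sum_mono2) (auto simp: assms)
  also have "\<dots> = (\<Sum>m<N. f m) + (\<Sum>m\<in>{N..<L}. f m)"
    by (rule sum.union_disjoint) auto
  finally show ?thesis .
qed

lemma tz_comp:
  assumes tb: "tbounded t K" and tzt: "tz t" shows "compact_op (blk t)"
  unfolding compact_op_def
proof (intro conjI allI impI)
  show "bop (blk t)" using blk_bop[OF tb] .
  fix xs :: "nat \<Rightarrow> nat \<Rightarrow> complex"
  assume "(\<forall>n. xs n \<in> l2) \<and> (\<exists>B. \<forall>n. l2norm (xs n) \<le> B)"
  then obtain B where xl2: "\<And>n. xs n \<in> l2" and B: "\<And>n. l2norm (xs n) \<le> B" by blast
  have B0: "B \<ge> 0" using B[of 0] l2norm_nonneg[OF xl2[of 0]] by linarith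
  have K0: "K \<ge> 0" using tb by (simp add: tbounded_def)
  define z where "z = (\<lambda>n. blk t (xs n))"
  have zl2: "z n \<in> l2" for n unfolding z_def using blk_l2(1)[OF tb xl2] .
  have zn: "l2norm (z n) \<le> 2 * K * B" for n
    using blk_l2(2)[OF tb xl2[of n]] B[of n] K0 unfolding z_def
    by (meson mult_left_mono order.trans zero_le_mult_iff zero_le_numeral)
  have zc: "cmod (z n m) \<le> 2 * K * B" for n m using coord_le[OF zl2] zn order.trans by blast
  interpret S: subseqs "\<lambda>m s. convergent (\<lambda>j. z (s j) m)"
  proof
    fix m and s :: "nat \<Rightarrow> nat" assume "strict_mono s"
    have "bounded (range (\<lambda>j. z (s j) m))" by (rule boundedI[of _ "2 * K * B"]) (use zc in auto)
    then obtain l r' where "strict_mono r'" "((\<lambda>j. z (s j) m) \<circ> r') \<longlonglongrightarrow> l"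
      using bounded_imp_convergent_subsequence by blast
    thus "\<exists>r'::nat\<Rightarrow>nat. strict_mono r' \<and> convergent (\<lambda>j. z ((s \<circ> r') j) m)"
      by (auto simp: convergent_def o_def)
  qed
  define r where "r = S.diagseq"
  have r: "strict_mono r" unfolding r_def by (rule S.subseq_diagseq)
  have conv: "convergent (\<lambda>j. z (r j) m)" for m
  proof -
    have "convergent (\<lambda>j. z ((S.diagseq \<circ> (+) (Suc m)) j) m)"
    proof (rule S.diagseq_holds)
      fix r' s :: "nat \<Rightarrow> nat" and n assume "strict_mono r'" "convergent (\<lambda>j. z (s j) n)"
      thus "convergent (\<lambda>j. z ((s \<circ> r') j) n)"
        using convergent_subseq_convergent[of "\<lambda>j. z (s j) n" r'] by (simp add: o_def)
    qed
    hence "convergent (\<lambda>j. z (r (j + Suc m)) m)" by (simp add: r_def o_def add.commute)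
    thus ?thesis using convergent_ignore_initial_segment[of "\<lambda>j. z (r j) m" "Suc m"] by simp
  qed
  define y where "y = (\<lambda>m. lim (\<lambda>j. z (r j) m))"
  have ylim: "(\<lambda>j. z (r j) m) \<longlonglongrightarrow> y m" for m unfolding y_def using conv convergent_LIMSEQ_iff by blast
  define w where "w = (\<lambda>j. z (r j))"
  have wl2: "w j \<in> l2" for j unfolding w_def using zl2 .
  have wlim: "(\<lambda>j. w j m) \<longlonglongrightarrow> y m" for m unfolding w_def using ylim .
  have finlim: "(\<lambda>j. \<Sum>m\<in>A. f (w j m)) \<longlonglongrightarrow> (\<Sum>m\<in>A. f (y m))" if "continuous_on UNIV f" for A and f :: "complex \<Rightarrow> real"
    by (intro tendsto_sum continuous_on_tendsto_compose[OF that wlim]) auto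
  have cont1: "continuous_on UNIV (\<lambda>u::complex. (cmod u)^2)" by (intro continuous_intros)
  have wpart: "(\<Sum>m<L. (cmod (w j m))^2) \<le> (2 * K * B)^2" for L j
  proof -
    have "(\<Sum>m<L. (cmod (w j m))^2) \<le> (\<Sum>m. (cmod (w j m))^2)"
      using wl2[of j] by (intro sum_le_suminf) (auto simp: l2_def)
    also have "\<dots> = (l2norm (w j))^2" using l2norm_sq[OF wl2] by simp
    also have "\<dots> \<le> (2 * K * B)^2" using zn[of "r j"] l2norm_nonneg[OF wl2[of j]] unfolding w_def
      by (intro power_mono) auto
    finally show ?thesis .
  qed
  have "(\<Sum>m<L. (cmod (y m))^2) \<le> (2 * K * B)^2" for L
    using finlim[OF cont1, of "{..<L}"] wpart by (intro LIMSEQ_le_const2) auto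
  hence "summable (\<lambda>k. (cmod (y k))^2)"
    by (intro summableI_nonneg_bounded[where x="(2 * K * B)^2"]) auto
  hence yl2: "y \<in> l2" unfolding l2_def by simp
  have "(\<lambda>j. l2norm (\<lambda>k. w j k - y k)) \<longlonglongrightarrow> 0"
  proof (rule LIMSEQ_I)
    fix e :: real assume e: "e > 0"
    define d where "d = e / (8 * (B + 1))"
    have d0: "d > 0" using e B0 by (simp add: d_def)
    have dB: "16 * d^2 * B^2 \<le> e^2 / 4"
    proof -
      have "d * B \<le> e / 8" using e B0 unfolding d_def by (simp add: field_simps)
      moreover have "0 \<le> d * B" using d0 B0 by simp
      ultimately have "(d * B)^2 \<le> (e/8)^2" using power_mono by blast
      thus ?thesis by (simp add: power_mult_distrib power_divide)
    qed
    obtain N where N: "\<And>m k. m \<ge> N \<Longrightarrow> k div 2 = m div 2 \<Longrightarrow> cmod (t m k) < d"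
      using tzt d0 unfolding tz_def by blast
    have tailw: "(\<Sum>m\<in>{N..<L}. (cmod (w j m))^2) \<le> 4 * d^2 * B^2" for j L
    proof -
      have "(\<Sum>m\<in>{N..<L}. (cmod (w j m))^2) \<le> (\<Sum>m\<in>{N..<L}. 2 * d^2 * G (xs (r j)) m)"
      proof (rule sum_mono)
        fix m assume "m \<in> {N..<L}"
        hence m: "m \<ge> N" by simp
        have "cmod (t m (bk m)) \<le> d" "cmod (t m (Suc (bk m))) \<le> d"
          using N[OF m] bk_div by (simp_all add: less_imp_le)
        from blk_pt_le2[where t=t and m=m and K=d and x="xs (r j)", OF this less_imp_le[OF d0]]
        show "(cmod (w j m))^2 \<le> 2 * d^2 * G (xs (r j)) m"
          unfolding w_def z_def blk_def using xl2 by simp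
      qed
      also have "\<dots> = 2 * d^2 * (\<Sum>m\<in>{N..<L}. G (xs (r j)) m)" by (simp add: sum_distrib_left)
      also have "\<dots> \<le> 2 * d^2 * (2 * (l2norm (xs (r j)))^2)"
        using G_sum_le[OF xl2] by (intro mult_left_mono) auto
      also have "\<dots> \<le> 2 * d^2 * (2 * B^2)"
        using B[of "r j"] l2norm_nonneg[OF xl2[of "r j"]] by (intro mult_left_mono power_mono) auto
      finally show ?thesis by simp
    qed
    have taily: "(\<Sum>m\<in>{N..<L}. (cmod (y m))^2) \<le> 4 * d^2 * B^2" for L
      using finlim[OF cont1, of "{N..<L}"] tailw by (intro LIMSEQ_le_const2) auto
    define H where "H = (\<lambda>j. \<Sum>m<N. (cmod (w j m - y m))^2)"
    have "(\<lambda>j. \<Sum>m<N. (cmod (w j m - y m))^2) \<longlonglongrightarrow> (\<Sum>m<N. (cmod (y m - y m))^2)"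
      by (intro tendsto_sum tendsto_power tendsto_norm tendsto_diff wlim tendsto_const)
    hence Hlim: "H \<longlonglongrightarrow> 0" unfolding H_def by simp
    have "e^2 / 2 > 0" using e by simp
    from LIMSEQ_D[OF Hlim this] obtain j0 where j0': "\<And>j. j \<ge> j0 \<Longrightarrow> norm (H j - 0) < e^2 / 2" by blast
    have j0: "H j < e^2 / 2" if "j \<ge> j0" for j using j0'[OF that] by simp
    show "\<exists>no. \<forall>j\<ge>no. norm (l2norm (\<lambda>k. w j k - y k) - 0) < e"
    proof (intro exI allI impI)
      fix j assume j: "j \<ge> j0"
      have dl2: "(\<lambda>k. w j k - y k) \<in> l2" using l2_diff[OF wl2 yl2] .
      have part: "(\<Sum>m<L. (cmod (w j m - y m))^2) \<le> H j + 16 * d^2 * B^2" for L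
      proof -
        have "(\<Sum>m<L. (cmod (w j m - y m))^2) \<le> H j + (\<Sum>m\<in>{N..<L}. (cmod (w j m - y m))^2)"
          unfolding H_def by (rule sum_split_le) simp
        also have "(\<Sum>m\<in>{N..<L}. (cmod (w j m - y m))^2) \<le> (\<Sum>m\<in>{N..<L}. 2 * (cmod (w j m))^2 + 2 * (cmod (y m))^2)"
          using sq_sum_le[of "w j m" "- y m" for m] by (intro sum_mono) simp
        also have "\<dots> = 2 * (\<Sum>m\<in>{N..<L}. (cmod (w j m))^2) + 2 * (\<Sum>m\<in>{N..<L}. (cmod (y m))^2)"
          by (simp add: sum.distrib sum_distrib_left)
        also have "\<dots> \<le> 16 * d^2 * B^2" using tailw[of j L] taily[of L] by linarith
        finally show ?thesis by linarith
      qed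
      have "(l2norm (\<lambda>k. w j k - y k))^2 \<le> H j + 16 * d^2 * B^2"
        unfolding l2norm_sq[OF dl2] using dl2 part by (intro suminf_le_const) (auto simp: l2_def)
      also have "\<dots> < e^2" using j0[OF j] dB \<open>e^2/2 > 0\<close> by linarith
      finally have "(l2norm (\<lambda>k. w j k - y k))^2 < e^2" .
      hence "l2norm (\<lambda>k. w j k - y k) < e" using e by (simp add: power_less_imp_less_base)
      thus "norm (l2norm (\<lambda>k. w j k - y k) - 0) < e" using l2norm_nonneg[OF dl2] by simp
    qed
  qed
  thus "\<exists>r y. strict_mono r \<and> y \<in> l2 \<and> (\<lambda>n. l2norm (\<lambda>k. blk t (xs (r n)) k - y k)) \<longlonglongrightarrow> 0"
    using r yl2 unfolding w_def z_def by blast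
qed


locale blkctx =
  fixes al :: real
  assumes al0: "0 \<le> al" and al1: "al \<le> 1"
begin

definition a :: complex where "a = complex_of_real al"
definition b :: complex where "b = complex_of_real (sqrt (1 - al^2))"

lemma ab1: "a * a + b * b = 1"
proof -
  have "al^2 \<le> 1" using al0 al1 by (simp add: power_le_one)
  hence "(sqrt (1 - al^2))^2 = 1 - al^2" by simp
  hence "al * al + sqrt (1 - al^2) * sqrt (1 - al^2) = 1" by (simp add: power2_eq_square)
  hence h: "complex_of_real (al * al + sqrt (1 - al^2) * sqrt (1 - al^2)) = 1" by simp
  have "a * a + b * b = complex_of_real (al * al + sqrt (1 - al^2) * sqrt (1 - al^2))"
    by (simp only: a_def b_def of_real_mult of_real_add)
  thus ?thesis using h by simp
qed

lemma cnj_ab[simp]: "cnj a = a" "cnj b = b" unfolding a_def b_def by simp_all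

lemma cmod_ab: "cmod a \<le> 1" "cmod b \<le> 1"
proof -
  have "al^2 \<le> 1" using al0 al1 by (simp add: power_le_one)
  thus "cmod a \<le> 1" "cmod b \<le> 1" unfolding a_def b_def using al0 al1 by (auto simp: real_sqrt_le_1_iff)
qed

definition M00 where "M00 t n = a*a*t (2*n) (2*n) + a*b*t (2*n) (Suc (2*n)) + b*a*t (Suc (2*n)) (2*n) + b*b*t (Suc (2*n)) (Suc (2*n))"
definition M01 where "M01 t n = a*b*t (2*n) (2*n) - a*a*t (2*n) (Suc (2*n)) + b*b*t (Suc (2*n)) (2*n) - b*a*t (Suc (2*n)) (Suc (2*n))"
definition M10 where "M10 t n = b*a*t (2*n) (2*n) + b*b*t (2*n) (Suc (2*n)) - a*a*t (Suc (2*n)) (2*n) - a*b*t (Suc (2*n)) (Suc (2*n))"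
definition M11 where "M11 t n = b*b*t (2*n) (2*n) - b*a*t (2*n) (Suc (2*n)) - a*b*t (Suc (2*n)) (2*n) + a*a*t (Suc (2*n)) (Suc (2*n))"

lemmas Mdefs = M00_def M01_def M10_def M11_def

lemma rec00: "t (2*n) (2*n) = a*a*M00 t n + a*b*M01 t n + b*a*M10 t n + b*b*M11 t n"
  unfolding Mdefs using ab1 by algebra
lemma rec01: "t (2*n) (Suc (2*n)) = a*b*M00 t n - a*a*M01 t n + b*b*M10 t n - b*a*M11 t n"
  unfolding Mdefs using ab1 by algebra
lemma rec10: "t (Suc (2*n)) (2*n) = b*a*M00 t n + b*b*M01 t n - a*a*M10 t n - a*b*M11 t n"
  unfolding Mdefs using ab1 by algebra
lemma rec11: "t (Suc (2*n)) (Suc (2*n)) = b*b*M00 t n - b*a*M01 t n - a*b*M10 t n + a*a*M11 t n"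
  unfolding Mdefs using ab1 by algebra

lemma tmul_blk: "tmul s t (2*n) k = s (2*n) (2*n) * t (2*n) k + s (2*n) (Suc (2*n)) * t (Suc (2*n)) k"
  "tmul s t (Suc (2*n)) k = s (Suc (2*n)) (2*n) * t (2*n) k + s (Suc (2*n)) (Suc (2*n)) * t (Suc (2*n)) k"
  by (simp_all add: tmul_def)

lemma M_mul:
  "M00 (tmul s t) n = M00 s n * M00 t n + M01 s n * M10 t n"
  "M01 (tmul s t) n = M00 s n * M01 t n + M01 s n * M11 t n"
  "M10 (tmul s t) n = M10 s n * M00 t n + M11 s n * M10 t n"
  "M11 (tmul s t) n = M10 s n * M01 t n + M11 s n * M11 t n"
  unfolding Mdefs tmul_blk using ab1 by algebra+

lemma M_add:
  "M00 (tadd s t) n = M00 s n + M00 t n" "M01 (tadd s t) n = M01 s n + M01 t n"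
  "M10 (tadd s t) n = M10 s n + M10 t n" "M11 (tadd s t) n = M11 s n + M11 t n"
  unfolding Mdefs tadd_def by algebra+
lemma M_diff:
  "M00 (tdiff s t) n = M00 s n - M00 t n" "M01 (tdiff s t) n = M01 s n - M01 t n"
  "M10 (tdiff s t) n = M10 s n - M10 t n" "M11 (tdiff s t) n = M11 s n - M11 t n"
  unfolding Mdefs tdiff_def by algebra+
lemma M_sc:
  "M00 (tsc c t) n = c * M00 t n" "M01 (tsc c t) n = c * M01 t n"
  "M10 (tsc c t) n = c * M10 t n" "M11 (tsc c t) n = c * M11 t n"
  unfolding Mdefs tsc_def by algebra+
lemma M_adj:
  "M01 (tadj t) n = cnj (M10 t n)" "M10 (tadj t) n = cnj (M01 t n)"
  unfolding Mdefs tadj_def by (simp_all add: algebra_simps)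

lemma four_bound:
  assumes "cmod p1 \<le> 1" "cmod p2 \<le> 1" "cmod p3 \<le> 1" "cmod p4 \<le> 1"
    "cmod t1 \<le> K" "cmod t2 \<le> K" "cmod t3 \<le> K" "cmod t4 \<le> K"
  shows "cmod (p1*t1 + p2*t2 + p3*t3 + p4*t4) \<le> 4 * K"
proof -
  have K: "K \<ge> 0" using assms(5) norm_ge_zero order.trans by blast
  have h: "cmod (p * t) \<le> K" if "cmod p \<le> 1" "cmod t \<le> K" for p t
  proof -
    have "cmod p * cmod t \<le> 1 * K" using that by (intro mult_mono) auto
    thus ?thesis by (simp add: norm_mult)
  qed
  have "cmod (p1*t1 + p2*t2 + p3*t3 + p4*t4) \<le> cmod (p1*t1) + cmod (p2*t2) + cmod (p3*t3) + cmod (p4*t4)"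
    by (meson add_mono norm_triangle_le order_refl)
  also have "\<dots> \<le> 4 * K" using h[OF assms(1,5)] h[OF assms(2,6)] h[OF assms(3,7)] h[OF assms(4,8)] by linarith
  finally show ?thesis .
qed

lemma pm_bound: "cmod (a*a) \<le> 1" "cmod (a*b) \<le> 1" "cmod (b*a) \<le> 1" "cmod (b*b) \<le> 1"
   "cmod (-(a*a)) \<le> 1" "cmod (-(a*b)) \<le> 1" "cmod (-(b*a)) \<le> 1" "cmod (-(b*b)) \<le> 1"
  using cmod_ab by (simp_all add: norm_mult mult_le_one)

lemma M_forms:
  "M00 t n = (a*a)*t (2*n) (2*n) + (a*b)*t (2*n) (Suc (2*n)) + (b*a)*t (Suc (2*n)) (2*n) + (b*b)*t (Suc (2*n)) (Suc (2*n))"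
  "M01 t n = (a*b)*t (2*n) (2*n) + (-(a*a))*t (2*n) (Suc (2*n)) + (b*b)*t (Suc (2*n)) (2*n) + (-(b*a))*t (Suc (2*n)) (Suc (2*n))"
  "M10 t n = (b*a)*t (2*n) (2*n) + (b*b)*t (2*n) (Suc (2*n)) + (-(a*a))*t (Suc (2*n)) (2*n) + (-(a*b))*t (Suc (2*n)) (Suc (2*n))"
  "M11 t n = (b*b)*t (2*n) (2*n) + (-(b*a))*t (2*n) (Suc (2*n)) + (-(a*b))*t (Suc (2*n)) (2*n) + (a*a)*t (Suc (2*n)) (Suc (2*n))"
  unfolding Mdefs by algebra+

lemma M_bound_blk:
  assumes "cmod (t (2*n) (2*n)) \<le> K" "cmod (t (2*n) (Suc (2*n))) \<le> K"
    "cmod (t (Suc (2*n)) (2*n)) \<le> K" "cmod (t (Suc (2*n)) (Suc (2*n))) \<le> K"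
  shows "cmod (M00 t n) \<le> 4*K" "cmod (M01 t n) \<le> 4*K" "cmod (M10 t n) \<le> 4*K" "cmod (M11 t n) \<le> 4*K"
  unfolding M_forms by (rule four_bound; (rule pm_bound | rule assms))+

lemma M_bound:
  assumes "\<And>m k. cmod (t m k) \<le> K"
  shows "cmod (M00 t n) \<le> 4*K" "cmod (M01 t n) \<le> 4*K" "cmod (M10 t n) \<le> 4*K" "cmod (M11 t n) \<le> 4*K"
  by (rule M_bound_blk; rule assms)+

lemma rec_forms:
  "t (2*n) (2*n) = (a*a)*M00 t n + (a*b)*M01 t n + (b*a)*M10 t n + (b*b)*M11 t n"
  "t (2*n) (Suc (2*n)) = (a*b)*M00 t n + (-(a*a))*M01 t n + (b*b)*M10 t n + (-(b*a))*M11 t n"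
  "t (Suc (2*n)) (2*n) = (b*a)*M00 t n + (b*b)*M01 t n + (-(a*a))*M10 t n + (-(a*b))*M11 t n"
  "t (Suc (2*n)) (Suc (2*n)) = (b*b)*M00 t n + (-(b*a))*M01 t n + (-(a*b))*M10 t n + (a*a)*M11 t n"
  using rec00[of t n] rec01[of t n] rec10[of t n] rec11[of t n] by (simp_all add: algebra_simps)

lemma rec_bound:
  assumes "cmod (M00 t n) \<le> K" "cmod (M01 t n) \<le> K" "cmod (M10 t n) \<le> K" "cmod (M11 t n) \<le> K"
  shows "cmod (t (2*n) (2*n)) \<le> 4*K" "cmod (t (2*n) (Suc (2*n))) \<le> 4*K"
    "cmod (t (Suc (2*n)) (2*n)) \<le> 4*K" "cmod (t (Suc (2*n)) (Suc (2*n))) \<le> 4*K"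
  by (subst rec_forms, rule four_bound; (rule pm_bound | rule assms))+

lemma same_block_cases:
  assumes "k div 2 = m div 2"
  shows "(m = 2*(m div 2) \<or> m = Suc (2*(m div 2))) \<and> (k = 2*(m div 2) \<or> k = Suc (2*(m div 2)))"
  using bk_eq_iff[of m m] bk_eq_iff[of k m] assms unfolding bk_def by auto

definition null :: "(nat \<Rightarrow> complex) \<Rightarrow> bool" where "null f \<longleftrightarrow> f \<longlonglongrightarrow> 0"

definition allnull where "allnull t \<longleftrightarrow> null (M00 t) \<and> null (M01 t) \<and> null (M10 t) \<and> null (M11 t)"
definition offnull where "offnull t \<longleftrightarrow> null (M01 t) \<and> null (M10 t)"

lemma nullI: "(\<And>e. e > 0 \<Longrightarrow> \<exists>N. \<forall>n\<ge>N. cmod (f n) < e) \<Longrightarrow> null f"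
  unfolding null_def by (rule LIMSEQ_I) simp

lemma nullD: "null f \<Longrightarrow> e > 0 \<Longrightarrow> \<exists>N. \<forall>n\<ge>N. cmod (f n) < e"
  unfolding null_def using LIMSEQ_D[of f 0 e] by simp

lemma tz_allnull: assumes "tz t" shows "allnull t"
proof -
  have main: "\<exists>N. \<forall>n\<ge>N. cmod (M00 t n) < e \<and> cmod (M01 t n) < e \<and> cmod (M10 t n) < e \<and> cmod (M11 t n) < e" if e: "e > 0" for e
  proof -
    obtain N where N: "\<And>m k. m \<ge> N \<Longrightarrow> k div 2 = m div 2 \<Longrightarrow> cmod (t m k) < e/8"
      using assms e unfolding tz_def by (meson divide_pos_pos zero_less_numeral)
    show ?thesis
    proof (intro exI allI impI)
      fix n assume n: "n \<ge> N"
      have "cmod (t (2*n) (2*n)) \<le> e/8" "cmod (t (2*n) (Suc (2*n))) \<le> e/8"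
        "cmod (t (Suc (2*n)) (2*n)) \<le> e/8" "cmod (t (Suc (2*n)) (Suc (2*n))) \<le> e/8"
        using N[of "2*n" "2*n"] N[of "2*n" "Suc (2*n)"] N[of "Suc (2*n)" "2*n"] N[of "Suc (2*n)" "Suc (2*n)"] n
        by (simp_all add: less_imp_le)
      from M_bound_blk[OF this] e
      show "cmod (M00 t n) < e \<and> cmod (M01 t n) < e \<and> cmod (M10 t n) < e \<and> cmod (M11 t n) < e"
        by auto
    qed
  qed
  show ?thesis unfolding allnull_def by (intro conjI nullI; metis main)
qed

lemma allnull_tz: assumes "allnull t" shows "tz t"
  unfolding tz_def
proof (intro allI impI)
  fix e :: real assume e: "e > 0"
  have e8: "e/8 > 0" using e by simp
  obtain N1 N2 N3 N4 where "\<forall>n\<ge>N1. cmod (M00 t n) < e/8" "\<forall>n\<ge>N2. cmod (M01 t n) < e/8"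
      "\<forall>n\<ge>N3. cmod (M10 t n) < e/8" "\<forall>n\<ge>N4. cmod (M11 t n) < e/8"
    using assms nullD[OF _ e8] unfolding allnull_def by metis
  hence h: "cmod (M00 t n) \<le> e/8 \<and> cmod (M01 t n) \<le> e/8 \<and> cmod (M10 t n) \<le> e/8 \<and> cmod (M11 t n) \<le> e/8"
    if "n \<ge> N1 + N2 + N3 + N4" for n using that by (auto intro!: less_imp_le)
  show "\<exists>N. \<forall>m\<ge>N. \<forall>k. k div 2 = m div 2 \<longrightarrow> cmod (t m k) < e"
  proof (intro exI allI impI)
    fix m k assume m: "m \<ge> 2 * (N1 + N2 + N3 + N4)" and k: "k div 2 = m div 2"
    define n where "n = m div 2"
    have "(2 * (N1 + N2 + N3 + N4)) div 2 \<le> m div 2" by (rule div_le_mono[OF m])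
    hence "n \<ge> N1 + N2 + N3 + N4" unfolding n_def by simp
    from h[OF this] have hb: "cmod (M00 t n) \<le> e/8" "cmod (M01 t n) \<le> e/8" "cmod (M10 t n) \<le> e/8" "cmod (M11 t n) \<le> e/8" by auto
    from rec_bound[OF hb] same_block_cases[OF k] have "cmod (t m k) \<le> 4 * (e/8)"
      unfolding n_def[symmetric] by auto
    thus "cmod (t m k) < e" using e by linarith
  qed
qed

lemma M_zero_out:
  assumes "bsupp X t" "n \<notin> X"
  shows "M00 t n = 0" "M01 t n = 0" "M10 t n = 0" "M11 t n = 0"
proof -
  have "t (2*n) (2*n) = 0" "t (2*n) (Suc (2*n)) = 0" "t (Suc (2*n)) (2*n) = 0" "t (Suc (2*n)) (Suc (2*n)) = 0"
    using assms unfolding bsupp_iff by simp_all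
  thus "M00 t n = 0" "M01 t n = 0" "M10 t n = 0" "M11 t n = 0" unfolding Mdefs by simp_all
qed

end


lemma ent_blk_bsupp: "bsupp X t \<Longrightarrow> ent (blk t) = t"
  unfolding bsupp_iff by (auto simp: fun_eq_iff ent_blk)

lemma A0_repr:
  assumes "T \<in> A0 X"
  obtains K where "T = blk (ent T)" "tbounded (ent T) K" "bsupp X (ent T)"
  using A0_blk[OF assms] A0_ent[OF assms] by blast

context blkctx begin

lemma fvec0: "fvec al (2*n) = (\<lambda>m. a * ebasis (2*n) m + b * ebasis (Suc (2*n)) m)"
  unfolding fvec_def a_def b_def by (simp add: Let_def)
lemma fvec1: "fvec al (Suc (2*n)) = (\<lambda>m. b * ebasis (2*n) m - a * ebasis (Suc (2*n)) m)"
  unfolding fvec_def a_def b_def by (simp add: Let_def)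

lemma fvec_l2: "fvec al j \<in> l2"
  by (rule l2_finite[of "Suc (Suc j)"]) (auto simp: fvec_def Let_def ebasis_def)

lemma blk_fvec0: "blk s (fvec al (2*n)) m = (if m div 2 = n then s m (2*n) * a + s m (Suc (2*n)) * b else 0)"
proof -
  have "blk s (fvec al (2*n)) m = s m (bk m) * fvec al (2*n) (bk m) + s m (Suc (bk m)) * fvec al (2*n) (Suc (bk m))"
    using fvec_l2 by (simp add: blk_def)
  also have "\<dots> = (if m div 2 = n then s m (2*n) * a + s m (Suc (2*n)) * b else 0)"
    unfolding fvec0 by (auto simp: ebasis_def bk_def)
  finally show ?thesis .
qed

lemma blk_fvec1: "blk s (fvec al (Suc (2*n))) m = (if m div 2 = n then s m (2*n) * b - s m (Suc (2*n)) * a else 0)"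
proof -
  have "blk s (fvec al (Suc (2*n))) m = s m (bk m) * fvec al (Suc (2*n)) (bk m) + s m (Suc (bk m)) * fvec al (Suc (2*n)) (Suc (bk m))"
    using fvec_l2 by (simp add: blk_def)
  also have "\<dots> = (if m div 2 = n then s m (2*n) * b - s m (Suc (2*n)) * a else 0)"
    unfolding fvec1 by (auto simp: ebasis_def bk_def)
  finally show ?thesis .
qed

lemma fvec0_val: "fvec al (2*n) (2*n) = a" "fvec al (2*n) (Suc (2*n)) = b"
  unfolding fvec0 by (simp_all add: ebasis_def)
lemma fvec1_val: "fvec al (Suc (2*n)) (2*n) = b" "fvec al (Suc (2*n)) (Suc (2*n)) = -a"
  unfolding fvec1 by (simp_all add: ebasis_def)
lemma fvec0_out: "m div 2 \<noteq> n \<Longrightarrow> fvec al (2*n) m = 0"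
  unfolding fvec0 by (auto simp: ebasis_def)
lemma fvec1_out: "m div 2 \<noteq> n \<Longrightarrow> fvec al (Suc (2*n)) m = 0"
  unfolding fvec1 by (auto simp: ebasis_def)

lemma Dset_off:
  assumes "S \<in> Dset X al"
  shows "M01 (ent S) n = 0" "M10 (ent S) n = 0"
proof -
  have A: "S \<in> A0 X" using assms by (simp add: Dset_def)
  then obtain K where SB: "S = blk (ent S)" and bs: "bsupp X (ent S)" by (rule A0_repr)
  define s where "s = ent S"
  have "M01 s n = 0 \<and> M10 s n = 0"
  proof (cases "n \<in> X")
    case False thus ?thesis using M_zero_out[OF bs False] unfolding s_def by simp
  next
    case True
    then obtain c c' where c: "S (fvec al (2*n)) = (\<lambda>m. c * fvec al (2*n) m)"
      and c': "S (fvec al (Suc (2*n))) = (\<lambda>m. c' * fvec al (Suc (2*n)) m)"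
      using assms unfolding Dset_def by auto
    have e1: "s (2*n) (2*n) * a + s (2*n) (Suc (2*n)) * b = c * a"
      using fun_cong[OF c, of "2*n"] SB blk_fvec0[of s n "2*n"] fvec0_val unfolding s_def by simp
    have e2: "s (Suc (2*n)) (2*n) * a + s (Suc (2*n)) (Suc (2*n)) * b = c * b"
      using fun_cong[OF c, of "Suc (2*n)"] SB blk_fvec0[of s n "Suc (2*n)"] fvec0_val unfolding s_def by simp
    have e3: "s (2*n) (2*n) * b - s (2*n) (Suc (2*n)) * a = c' * b"
      using fun_cong[OF c', of "2*n"] SB blk_fvec1[of s n "2*n"] fvec1_val unfolding s_def by simp
    have e4: "s (Suc (2*n)) (2*n) * b - s (Suc (2*n)) (Suc (2*n)) * a = c' * (-a)"
      using fun_cong[OF c', of "Suc (2*n)"] SB blk_fvec1[of s n "Suc (2*n)"] fvec1_val unfolding s_def by simp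
    have "M10 s n = b * (s (2*n) (2*n) * a + s (2*n) (Suc (2*n)) * b) - a * (s (Suc (2*n)) (2*n) * a + s (Suc (2*n)) (Suc (2*n)) * b)"
      unfolding Mdefs by algebra
    also have "\<dots> = 0" unfolding e1 e2 by algebra
    finally have m10: "M10 s n = 0" .
    have "M01 s n = a * (s (2*n) (2*n) * b - s (2*n) (Suc (2*n)) * a) + b * (s (Suc (2*n)) (2*n) * b - s (Suc (2*n)) (Suc (2*n)) * a)"
      unfolding Mdefs by algebra
    also have "\<dots> = 0" unfolding e3 e4 by algebra
    finally show ?thesis using m10 by simp
  qed
  thus "M01 (ent S) n = 0" "M10 (ent S) n = 0" unfolding s_def by auto
qed

definition pv :: "nat \<Rightarrow> complex" where "pv m = (if even m then a else b)"
definition qv :: "nat \<Rightarrow> complex" where "qv m = (if even m then b else -a)"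

definition dpart :: "(nat \<Rightarrow> nat \<Rightarrow> complex) \<Rightarrow> nat \<Rightarrow> nat \<Rightarrow> complex" where
  "dpart t = (\<lambda>m k. if m div 2 = k div 2 then M00 t (m div 2) * pv m * pv k + M11 t (m div 2) * qv m * qv k else 0)"

lemma pv_simps[simp]: "pv (2*n) = a" "pv (Suc (2*n)) = b" "qv (2*n) = b" "qv (Suc (2*n)) = -a"
  by (simp_all add: pv_def qv_def)

lemma dpart_blk:
  "dpart t (2*n) (2*n) = M00 t n * a * a + M11 t n * b * b"
  "dpart t (2*n) (Suc (2*n)) = M00 t n * a * b - M11 t n * b * a"
  "dpart t (Suc (2*n)) (2*n) = M00 t n * b * a - M11 t n * a * b"
  "dpart t (Suc (2*n)) (Suc (2*n)) = M00 t n * b * b + M11 t n * a * a"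
  by (simp_all add: dpart_def)

lemma M_dpart: "M00 (dpart t) n = M00 t n" "M01 (dpart t) n = 0" "M10 (dpart t) n = 0" "M11 (dpart t) n = M11 t n"
  unfolding Mdefs dpart_blk using ab1 by algebra+

lemma dpart_bounded: assumes "tbounded t K" shows "tbounded (dpart t) (8*K)"
proof -
  have K: "K \<ge> 0" "\<And>m k. cmod (t m k) \<le> K" using assms by (auto simp: tbounded_def)
  have pq: "cmod (pv m) \<le> 1" "cmod (qv m) \<le> 1" for m using cmod_ab by (auto simp: pv_def qv_def)
  have "cmod (dpart t m k) \<le> 8 * K" for m k
  proof -
    have h: "cmod (x * pv m * pv k) \<le> 4 * K" "cmod (y * qv m * qv k) \<le> 4 * K"
      if "cmod x \<le> 4 * K" "cmod y \<le> 4*K" for x y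
    proof -
      have "cmod x * (cmod (pv m) * cmod (pv k)) \<le> 4 * K * (1 * 1)" using that pq K
        by (intro mult_mono) (auto intro: mult_mono)
      thus "cmod (x * pv m * pv k) \<le> 4 * K" by (simp add: norm_mult mult.assoc)
      have "cmod y * (cmod (qv m) * cmod (qv k)) \<le> 4 * K * (1 * 1)" using that pq K
        by (intro mult_mono) (auto intro: mult_mono)
      thus "cmod (y * qv m * qv k) \<le> 4 * K" by (simp add: norm_mult mult.assoc)
    qed
    have b1: "cmod (M00 t (m div 2)) \<le> 4*K" by (rule M_bound(1)) (rule K(2))
    have b4: "cmod (M11 t (m div 2)) \<le> 4*K" by (rule M_bound(4)) (rule K(2))
    have "cmod (M00 t (m div 2) * pv m * pv k + M11 t (m div 2) * qv m * qv k) \<le> 4*K + 4*K"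
      using h[OF b1 b4] by (meson add_mono norm_triangle_le)
    thus ?thesis unfolding dpart_def using K(1) by auto
  qed
  thus ?thesis using K by (simp add: tbounded_def)
qed

lemma dpart_bsupp: assumes "bsupp X t" shows "bsupp X (dpart t)"
  unfolding bsupp_iff
proof (intro allI impI)
  fix m k assume h: "\<not> (m div 2 = k div 2 \<and> m div 2 \<in> X)"
  show "dpart t m k = 0"
  proof (cases "m div 2 = k div 2")
    case True
    hence "m div 2 \<notin> X" using h by blast
    note z = M_zero_out[OF assms this]
    have "dpart t m k = M00 t (m div 2) * pv m * pv k + M11 t (m div 2) * qv m * qv k"
      unfolding dpart_def by (subst if_P[OF True]) (rule refl)
    thus ?thesis using z by simp
  qed (simp add: dpart_def)
qed

lemma dpart_eig0: "blk (dpart t) (fvec al (2*n)) = (\<lambda>m. M00 t n * fvec al (2*n) m)"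
proof
  fix m
  show "blk (dpart t) (fvec al (2*n)) m = M00 t n * fvec al (2*n) m"
  proof (cases "m div 2 = n")
    case True
    have "m = 2*n \<or> m = Suc (2*n)" using same_block_cases[of m m] True by auto
    thus ?thesis
    proof
      assume m: "m = 2*n"
      have "blk (dpart t) (fvec al (2*n)) m = (M00 t n * a * a + M11 t n * b * b) * a + (M00 t n * a * b - M11 t n * b * a) * b"
        unfolding blk_fvec0 m by (simp add: dpart_blk)
      also have "\<dots> = M00 t n * a" using ab1 by algebra
      finally show ?thesis unfolding m fvec0_val .
    next
      assume m: "m = Suc (2*n)"
      have "blk (dpart t) (fvec al (2*n)) m = (M00 t n * b * a - M11 t n * a * b) * a + (M00 t n * b * b + M11 t n * a * a) * b"
        unfolding blk_fvec0 m by (simp add: dpart_blk)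
      also have "\<dots> = M00 t n * b" using ab1 by algebra
      finally show ?thesis unfolding m fvec0_val .
    qed
  next
    case False thus ?thesis by (simp add: blk_fvec0 fvec0_out)
  qed
qed

lemma dpart_eig1: "blk (dpart t) (fvec al (Suc (2*n))) = (\<lambda>m. M11 t n * fvec al (Suc (2*n)) m)"
proof
  fix m
  show "blk (dpart t) (fvec al (Suc (2*n))) m = M11 t n * fvec al (Suc (2*n)) m"
  proof (cases "m div 2 = n")
    case True
    have "m = 2*n \<or> m = Suc (2*n)" using same_block_cases[of m m] True by auto
    thus ?thesis
    proof
      assume m: "m = 2*n"
      have "blk (dpart t) (fvec al (Suc (2*n))) m = (M00 t n * a * a + M11 t n * b * b) * b - (M00 t n * a * b - M11 t n * b * a) * a"
        unfolding blk_fvec1 m by (simp add: dpart_blk)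
      also have "\<dots> = M11 t n * b" using ab1 by algebra
      finally show ?thesis unfolding m fvec1_val .
    next
      assume m: "m = Suc (2*n)"
      have "blk (dpart t) (fvec al (Suc (2*n))) m = (M00 t n * b * a - M11 t n * a * b) * b - (M00 t n * b * b + M11 t n * a * a) * a"
        unfolding blk_fvec1 m by (simp add: dpart_blk)
      also have "\<dots> = M11 t n * (-a)" using ab1 by algebra
      finally show ?thesis unfolding m fvec1_val .
    qed
  next
    case False thus ?thesis by (simp add: blk_fvec1 fvec1_out)
  qed
qed

end


lemma bop_diff:
  assumes A: "bop A" and B: "bop B" shows "bop (op_diff A B)"
  unfolding bop_def
proof (intro conjI ballI allI impI)
  fix x assume x: "x \<in> l2"
  show "op_diff A B x \<in> l2" unfolding op_diff_def using bopD(1)[OF A x] bopD(1)[OF B x] by (rule l2_diff)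
next
  fix x y a b assume x: "x \<in> l2" and y: "y \<in> l2"
  show "op_diff A B (\<lambda>k. a * x k + b * y k) = (\<lambda>k. a * op_diff A B x k + b * op_diff A B y k)"
    unfolding op_diff_def bopD(2)[OF A x y] bopD(2)[OF B x y] by (simp add: algebra_simps)
next
  obtain CA where CA: "CA \<ge> 0" "\<And>x. x \<in> l2 \<Longrightarrow> l2norm (A x) \<le> CA * l2norm x" using bop_bound[OF A] by blast
  obtain CB where CB: "CB \<ge> 0" "\<And>x. x \<in> l2 \<Longrightarrow> l2norm (B x) \<le> CB * l2norm x" using bop_bound[OF B] by blast
  have "l2norm (op_diff A B x) \<le> (2 * (CA + CB)) * l2norm x" if x: "x \<in> l2" for x
  proof -
    have "l2norm (op_diff A B x) \<le> 2 * (l2norm (A x) + l2norm (B x))"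
      unfolding op_diff_def by (rule l2norm_diff_le[OF bopD(1)[OF A x] bopD(1)[OF B x]])
    also have "\<dots> \<le> 2 * (CA * l2norm x + CB * l2norm x)" using CA(2)[OF x] CB(2)[OF x] by simp
    finally show ?thesis by (simp add: algebra_simps)
  qed
  thus "\<exists>C. \<forall>x\<in>l2. l2norm (op_diff A B x) \<le> C * l2norm x" by blast
next
  fix x assume "x \<notin> l2"
  thus "op_diff A B x = (\<lambda>k. 0)" unfolding op_diff_def using bopD(3)[OF A] bopD(3)[OF B] by simp
qed

lemma opnorm_ent:
  assumes D: "bop D" shows "cmod (ent D m k) \<le> opnorm D"
proof -
  obtain C where C: "C \<ge> 0" "\<And>x. x \<in> l2 \<Longrightarrow> l2norm (D x) \<le> C * l2norm x" using bop_bound[OF D] by blast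
  have bdd: "bdd_above {l2norm (D x) | x. x \<in> l2 \<and> l2norm x \<le> 1}"
  proof (rule bdd_aboveI)
    fix r assume "r \<in> {l2norm (D x) | x. x \<in> l2 \<and> l2norm x \<le> 1}"
    then obtain x where x: "x \<in> l2" "l2norm x \<le> 1" "r = l2norm (D x)" by blast
    have "C * l2norm x \<le> C * 1" using x(2) C(1) by (intro mult_left_mono)
    thus "r \<le> C" using C(2)[OF x(1)] x(3) by simp
  qed
  have "cmod (ent D m k) \<le> l2norm (D (ebasis k))" unfolding ent_def
    by (rule coord_le) (rule bopD(1)[OF D ebasis_l2])
  also have "\<dots> \<le> opnorm D" unfolding opnorm_def
    by (rule cSup_upper[OF _ bdd]) auto
  finally show ?thesis .
qed

context blkctx begin

lemma null_add: "null f \<Longrightarrow> null g \<Longrightarrow> null (\<lambda>n. f n + g n)"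
  unfolding null_def using tendsto_add[of f 0 sequentially g 0] by simp
lemma null_diff: "null f \<Longrightarrow> null g \<Longrightarrow> null (\<lambda>n. f n - g n)"
  unfolding null_def using tendsto_diff[of f 0 sequentially g 0] by simp
lemma null_cmult: "null f \<Longrightarrow> null (\<lambda>n. c * f n)"
  unfolding null_def using tendsto_mult[of "\<lambda>_. c" c sequentially f 0] by simp
lemma null_cnj: "null f \<Longrightarrow> null (\<lambda>n. cnj (f n))"
  unfolding null_def using tendsto_cnj[of f 0 sequentially] by simp
lemma null_zero: "null (\<lambda>n. 0)" unfolding null_def by simp
lemma null_bmult:
  fixes f :: "nat \<Rightarrow> complex"
  assumes "\<And>n. cmod (g n) \<le> C" "null f" shows "null (\<lambda>n. g n * f n)" "null (\<lambda>n. f n * g n)"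
proof -
  have "(\<lambda>n. C * cmod (f n)) \<longlonglongrightarrow> C * 0"
    using assms(2) unfolding null_def by (intro tendsto_mult tendsto_const tendsto_norm_zero)
  hence l: "(\<lambda>n. C * cmod (f n)) \<longlonglongrightarrow> 0" by simp
  have b: "norm (g n * f n) \<le> C * cmod (f n)" for n
    using assms(1)[of n] by (simp add: norm_mult mult_right_mono)
  show "null (\<lambda>n. g n * f n)" unfolding null_def
    by (rule Lim_null_comparison[OF _ l]) (simp add: b)
  thus "null (\<lambda>n. f n * g n)" by (simp add: mult.commute)
qed


lemma DK_char: "T \<in> DK X al \<longleftrightarrow> T \<in> A0 X \<and> offnull (ent T)"
proof
  assume "T \<in> DK X al"
  then obtain S R where T: "T = op_add S R" and S: "S \<in> Dset X al" and R: "R \<in> A0 X" "compact_op R"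
    unfolding DK_def by blast
  have SA: "S \<in> A0 X" using S by (simp add: Dset_def)
  obtain Ks where S1: "S = blk (ent S)" "tbounded (ent S) Ks" "bsupp X (ent S)" by (rule A0_repr[OF SA])
  obtain Kr where R1: "R = blk (ent R)" "tbounded (ent R) Kr" "bsupp X (ent R)" by (rule A0_repr[OF R(1)])
  have TB: "T = blk (tadd (ent S) (ent R))" unfolding T by (subst S1(1), subst R1(1), rule blk_add)
  have bs: "bsupp X (tadd (ent S) (ent R))" by (rule bsupp_add[OF S1(3) R1(3)])
  have "T \<in> A0 X" unfolding TB by (rule blk_A0[OF tb_add[OF S1(2) R1(2)] bs])
  moreover have "ent T = tadd (ent S) (ent R)" unfolding TB by (rule ent_blk_bsupp[OF bs])
  moreover have "offnull (tadd (ent S) (ent R))"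
  proof -
    have "compact_op (blk (ent R))" using R(2) R1(1) by simp
    hence "allnull (ent R)" by (intro tz_allnull comp_tz[OF R1(2)])
    thus ?thesis unfolding offnull_def allnull_def M_add Dset_off[OF S] by simp
  qed
  ultimately show "T \<in> A0 X \<and> offnull (ent T)" by simp
next
  assume h: "T \<in> A0 X \<and> offnull (ent T)"
  define t where "t = ent T"
  obtain K where T1: "T = blk t" "tbounded t K" "bsupp X t" unfolding t_def by (rule A0_repr[OF conjunct1[OF h]])
  have off: "offnull t" using h t_def by simp
  define d where "d = dpart t"
  have dS: "blk d \<in> Dset X al"
    unfolding Dset_def
  proof (intro CollectI conjI ballI)
    show "blk d \<in> A0 X" unfolding d_def by (rule blk_A0[OF dpart_bounded[OF T1(2)] dpart_bsupp[OF T1(3)]])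
    fix n assume "n \<in> X"
    show "\<exists>c. blk d (fvec al (2 * n)) = (\<lambda>m. c * fvec al (2 * n) m)"
      unfolding d_def dpart_eig0 by blast
    show "\<exists>c. blk d (fvec al (2 * n + 1)) = (\<lambda>m. c * fvec al (2 * n + 1) m)"
      unfolding d_def using dpart_eig1 by auto
  qed
  have rA: "blk (tdiff t d) \<in> A0 X"
    unfolding d_def by (rule blk_A0[OF tb_diff[OF T1(2) dpart_bounded[OF T1(2)]] bsupp_diff[OF T1(3) dpart_bsupp[OF T1(3)]]])
  have "allnull (tdiff t d)"
    using off unfolding allnull_def offnull_def d_def M_diff M_dpart by (simp add: null_zero)
  hence tzd: "tz (tdiff t d)" by (rule allnull_tz)
  have tbd: "tbounded (tdiff t d) (K + 8*K)" unfolding d_def by (rule tb_diff[OF T1(2) dpart_bounded[OF T1(2)]])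
  have rc: "compact_op (blk (tdiff t d))" by (rule tz_comp[OF tbd tzd])
  have "T = op_add (blk d) (blk (tdiff t d))"
    unfolding blk_add T1(1) by (rule arg_cong[where f=blk]) (simp add: tadd_def tdiff_def fun_eq_iff)
  thus "T \<in> DK X al" unfolding DK_def using dS rA rc by blast
qed

lemma DK_intro: "tbounded t K \<Longrightarrow> bsupp X t \<Longrightarrow> offnull t \<Longrightarrow> blk t \<in> DK X al"
  unfolding DK_char using blk_A0 ent_blk_bsupp by metis

lemma DK_elim:
  assumes "T \<in> DK X al"
  obtains K where "T = blk (ent T)" "tbounded (ent T) K" "bsupp X (ent T)" "offnull (ent T)"
  using assms unfolding DK_char using A0_repr by metis

lemma M_bounded:
  assumes "tbounded t K"
  shows "cmod (M00 t n) \<le> 4*K" "cmod (M01 t n) \<le> 4*K" "cmod (M10 t n) \<le> 4*K" "cmod (M11 t n) \<le> 4*K"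
  using assms unfolding tbounded_def by (intro M_bound; blast)+

end


context blkctx begin

lemma offnull_mul:
  assumes "tbounded s Ks" "tbounded t Kt" "offnull s" "offnull t"
  shows "offnull (tmul s t)"
proof -
  note bs = M_bounded[OF assms(1)] and bt = M_bounded[OF assms(2)]
  have s1: "null (M01 s)" "null (M10 s)" and t1: "null (M01 t)" "null (M10 t)"
    using assms(3,4) unfolding offnull_def by auto
  have "null (\<lambda>n. M00 s n * M01 t n + M01 s n * M11 t n)"
    by (intro null_add null_bmult(1)[OF bs(1) t1(1)] null_bmult(2)[OF bt(4) s1(1)])
  moreover have "null (\<lambda>n. M10 s n * M00 t n + M11 s n * M10 t n)"
    by (intro null_add null_bmult(2)[OF bt(1) s1(2)] null_bmult(1)[OF bs(4) t1(2)])
  ultimately show ?thesis unfolding offnull_def M_mul by simp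
qed

lemma Mf_add: "M01 (tadd s t) = (\<lambda>n. M01 s n + M01 t n)" "M10 (tadd s t) = (\<lambda>n. M10 s n + M10 t n)"
  by (simp_all add: fun_eq_iff M_add)
lemma Mf_sc: "M01 (tsc c t) = (\<lambda>n. c * M01 t n)" "M10 (tsc c t) = (\<lambda>n. c * M10 t n)"
  by (simp_all add: fun_eq_iff M_sc)
lemma Mf_adj: "M01 (tadj t) = (\<lambda>n. cnj (M10 t n))" "M10 (tadj t) = (\<lambda>n. cnj (M01 t n))"
  by (simp_all add: fun_eq_iff M_adj)

lemma M_zero: "M01 (\<lambda>m k. 0) = (\<lambda>n. 0)" "M10 (\<lambda>m k. 0) = (\<lambda>n. 0)"
  by (simp_all add: fun_eq_iff Mdefs)

lemma zero_blk: "(\<lambda>x k. 0) = blk (\<lambda>m k. 0)"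
  by (auto simp: blk_def fun_eq_iff)

lemma DK_cstar: "cstar_subalg (DK X al)"
  unfolding cstar_subalg_def
proof (intro conjI ballI allI impI)
  show "DK X al \<subseteq> Collect bop"
  proof
    fix x assume "x \<in> DK X al"
    hence "x \<in> A0 X" using DK_char by blast
    thus "x \<in> Collect bop" by (simp add: A0_def)
  qed
  show "(\<lambda>x k. 0) \<in> DK X al" unfolding zero_blk
    by (rule DK_intro[where K=0]) (auto simp: tbounded_def bsupp_def offnull_def M_zero null_zero)
next
  fix S T assume S: "S \<in> DK X al" and T: "T \<in> DK X al"
  obtain Ks where S1: "S = blk (ent S)" "tbounded (ent S) Ks" "bsupp X (ent S)" "offnull (ent S)" by (rule DK_elim[OF S])
  obtain Kt where T1: "T = blk (ent T)" "tbounded (ent T) Kt" "bsupp X (ent T)" "offnull (ent T)" by (rule DK_elim[OF T])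
  have "op_add S T = blk (tadd (ent S) (ent T))" by (subst S1(1), subst T1(1), rule blk_add)
  moreover have "blk (tadd (ent S) (ent T)) \<in> DK X al"
    using S1(4) T1(4) unfolding offnull_def
    by (intro DK_intro[OF tb_add[OF S1(2) T1(2)] bsupp_add[OF S1(3) T1(3)]]) (simp add: offnull_def Mf_add null_add)
  ultimately show "op_add S T \<in> DK X al" by simp
  have "S \<circ> T = blk (tmul (ent S) (ent T))" by (subst S1(1), subst T1(1), rule blk_comp[OF T1(2)])
  moreover have "blk (tmul (ent S) (ent T)) \<in> DK X al"
    by (intro DK_intro[OF tb_mul[OF S1(2) T1(2)] bsupp_mul[OF S1(3) T1(3)]] offnull_mul[OF S1(2) T1(2) S1(4) T1(4)])
  ultimately show "S \<circ> T \<in> DK X al" by simp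
next
  fix c T assume T: "T \<in> DK X al"
  obtain Kt where T1: "T = blk (ent T)" "tbounded (ent T) Kt" "bsupp X (ent T)" "offnull (ent T)" by (rule DK_elim[OF T])
  have "op_smult c T = blk (tsc c (ent T))" by (subst T1(1), rule blk_sc)
  moreover have "blk (tsc c (ent T)) \<in> DK X al"
    using T1(4) by (intro DK_intro[OF tb_sc[OF T1(2)] bsupp_sc[OF T1(3)]]) (simp add: offnull_def Mf_sc null_cmult)
  ultimately show "op_smult c T \<in> DK X al" by simp
next
  fix T assume T: "T \<in> DK X al"
  obtain Kt where T1: "T = blk (ent T)" "tbounded (ent T) Kt" "bsupp X (ent T)" "offnull (ent T)" by (rule DK_elim[OF T])
  have "blk (tadj (ent T)) \<in> DK X al"
    using T1(4) by (intro DK_intro[OF tb_adj[OF T1(2)] bsupp_adj[OF T1(3)]]) (simp add: offnull_def Mf_adj null_cnj)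
  moreover have "is_adjoint T (blk (tadj (ent T)))" by (subst T1(1), rule blk_adjoint[OF T1(2)])
  ultimately show "\<exists>S\<in>DK X al. is_adjoint T S" by blast
next
  fix Ts T
  assume h: "(\<forall>n. Ts n \<in> DK X al) \<and> bop T \<and> (\<lambda>n. opnorm (op_diff (Ts n) T)) \<longlonglongrightarrow> 0"
  hence Ts: "\<And>n. Ts n \<in> DK X al" and bT: "bop T" and lim: "(\<lambda>n. opnorm (op_diff (Ts n) T)) \<longlonglongrightarrow> 0" by auto
  have TsA: "Ts n \<in> A0 X" for n using Ts unfolding DK_char by blast
  have bTs: "bop (Ts n)" for n using TsA unfolding A0_def by blast
  have entD: "cmod (ent (Ts n) m k - ent T m k) \<le> opnorm (op_diff (Ts n) T)" for n m k
  proof -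
    have "ent (op_diff (Ts n) T) m k = ent (Ts n) m k - ent T m k" by (simp add: ent_def op_diff_def)
    thus ?thesis using opnorm_ent[where D="op_diff (Ts n) T" and m=m and k=k, OF bop_diff[OF bTs bT]] by simp
  qed
  have small: "\<exists>j. opnorm (op_diff (Ts j) T) < r" if "r > 0" for r
    using LIMSEQ_D[OF lim that] by (metis abs_less_iff diff_zero le_refl real_norm_def)
  have TA: "T \<in> A0 X" unfolding A0_def
  proof (intro CollectI conjI bT allI impI)
    fix k m assume ne: "T (ebasis k) m \<noteq> 0"
    have "cmod (T (ebasis k) m) > 0" using ne by simp
    then obtain j where j: "opnorm (op_diff (Ts j) T) < cmod (T (ebasis k) m)" using small by blast
    have "ent (Ts j) m k \<noteq> 0"
    proof
      assume "ent (Ts j) m k = 0"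
      hence "cmod (T (ebasis k) m) \<le> opnorm (op_diff (Ts j) T)" using entD[of j m k] by (simp add: ent_def)
      thus False using j by simp
    qed
    hence nz: "Ts j (ebasis k) m \<noteq> 0" by (simp add: ent_def)
    have "\<forall>k m. Ts j (ebasis k) m \<noteq> 0 \<longrightarrow> (\<exists>n\<in>X. k \<in> {2 * n, 2 * n + 1} \<and> m \<in> {2 * n, 2 * n + 1})"
      using TsA[of j] by (simp add: A0_def)
    thus "\<exists>n\<in>X. k \<in> {2 * n, 2 * n + 1} \<and> m \<in> {2 * n, 2 * n + 1}"
      using nz by blast
  qed
  have off: "offnull (ent T)"
  proof -
    have key: "null (F (ent T))" if F: "\<And>t n. F t n = (if i then M01 t n else M10 t n)" for F :: "(nat \<Rightarrow> nat \<Rightarrow> complex) \<Rightarrow> nat \<Rightarrow> complex" and i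
    proof (rule nullI)
      fix e :: real assume e: "e > 0"
      obtain j where j: "opnorm (op_diff (Ts j) T) < e / 8" using small[of "e/8"] e by auto
      obtain Kj where Tj: "tbounded (ent (Ts j)) Kj" "offnull (ent (Ts j))" using DK_elim[OF Ts[of j]] by metis
      have "null (F (ent (Ts j)))" using Tj(2) unfolding offnull_def F by (cases i) (simp_all add: fun_eq_iff)
      from nullD[OF this, of "e/2"] e obtain N where N: "\<And>n. n \<ge> N \<Longrightarrow> cmod (F (ent (Ts j)) n) < e/2" by auto
      show "\<exists>N. \<forall>n\<ge>N. cmod (F (ent T) n) < e"
      proof (intro exI allI impI)
        fix n assume n: "n \<ge> N"
        have d: "cmod (tdiff (ent (Ts j)) (ent T) m k) \<le> opnorm (op_diff (Ts j) T)" for m k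
          unfolding tdiff_def by (rule entD)
        have "F (ent (Ts j)) n - F (ent T) n = F (tdiff (ent (Ts j)) (ent T)) n"
          unfolding F by (simp add: M_diff)
        moreover have "cmod (F (tdiff (ent (Ts j)) (ent T)) n) \<le> 4 * opnorm (op_diff (Ts j) T)"
          unfolding F using M_bound(2)[OF d] M_bound(3)[OF d] by simp
        ultimately have "cmod (F (ent (Ts j)) n - F (ent T) n) \<le> 4 * opnorm (op_diff (Ts j) T)" by simp
        moreover have "cmod (F (ent T) n) \<le> cmod (F (ent (Ts j)) n) + cmod (F (ent (Ts j)) n - F (ent T) n)"
          using norm_triangle_ineq4[of "F (ent (Ts j)) n" "F (ent (Ts j)) n - F (ent T) n"] by simp
        ultimately have "cmod (F (ent T) n) \<le> cmod (F (ent (Ts j)) n) + 4 * opnorm (op_diff (Ts j) T)"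
          by linarith
        thus "cmod (F (ent T) n) < e" using N[OF n] j by linarith
      qed
    qed
    have "null (M01 (ent T))" using key[of "\<lambda>t n. M01 t n" True] by simp
    moreover have "null (M10 (ent T))" using key[of "\<lambda>t n. M10 t n" False] by simp
    ultimately show ?thesis unfolding offnull_def by simp
  qed
  show "T \<in> DK X al" unfolding DK_char using TA off by blast
qed

end


context blkctx begin

lemma DK_ac: "almost_commutative (DK X al)"
  unfolding almost_commutative_def almost_commute_def
proof (intro ballI)
  fix S T assume S: "S \<in> DK X al" and T: "T \<in> DK X al"
  obtain Ks where S1: "S = blk (ent S)" "tbounded (ent S) Ks" "bsupp X (ent S)" "offnull (ent S)" by (rule DK_elim[OF S])
  obtain Kt where T1: "T = blk (ent T)" "tbounded (ent T) Kt" "bsupp X (ent T)" "offnull (ent T)" by (rule DK_elim[OF T])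
  define s where "s = ent S"
  define t where "t = ent T"
  have sb: "tbounded s Ks" and tb: "tbounded t Kt" using S1 T1 unfolding s_def t_def by auto
  have s1: "null (M01 s)" "null (M10 s)" and t1: "null (M01 t)" "null (M10 t)"
    using S1(4) T1(4) unfolding offnull_def s_def t_def by auto
  note bs = M_bounded[OF sb] and bt = M_bounded[OF tb]
  define c where "c = tdiff (tmul s t) (tmul t s)"
  have Seq: "S = blk s" unfolding s_def by (rule S1(1))
  have Teq: "T = blk t" unfolding t_def by (rule T1(1))
  have ST: "S \<circ> T = blk (tmul s t)" unfolding Seq Teq by (rule blk_comp[OF tb])
  have TS: "T \<circ> S = blk (tmul t s)" unfolding Seq Teq by (rule blk_comp[OF sb])
  have eq: "op_diff (S \<circ> T) (T \<circ> S) = blk c"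
    unfolding ST TS c_def by (rule blk_diff)
  have "M00 c = (\<lambda>n. M01 s n * M10 t n - M01 t n * M10 s n)"
    unfolding c_def by (simp add: fun_eq_iff M_diff M_mul algebra_simps)
  moreover have "null (\<lambda>n. M01 s n * M10 t n - M01 t n * M10 s n)"
    by (intro null_diff null_bmult(2)[OF bt(3) s1(1)] null_bmult(2)[OF bs(3) t1(1)])
  ultimately have n00: "null (M00 c)" by simp
  have "M11 c = (\<lambda>n. M10 s n * M01 t n - M10 t n * M01 s n)"
    unfolding c_def by (simp add: fun_eq_iff M_diff M_mul algebra_simps)
  moreover have "null (\<lambda>n. M10 s n * M01 t n - M10 t n * M01 s n)"
    by (intro null_diff null_bmult(2)[OF bt(2) s1(2)] null_bmult(2)[OF bs(2) t1(2)])
  ultimately have n11: "null (M11 c)" by simp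
  have "M01 c = (\<lambda>n. (M00 s n * M01 t n + M01 s n * M11 t n) - (M00 t n * M01 s n + M01 t n * M11 s n))"
    unfolding c_def by (simp add: fun_eq_iff M_diff M_mul)
  moreover have "null (\<lambda>n. (M00 s n * M01 t n + M01 s n * M11 t n) - (M00 t n * M01 s n + M01 t n * M11 s n))"
    by (intro null_diff null_add null_bmult(1)[OF bs(1) t1(1)] null_bmult(2)[OF bt(4) s1(1)]
        null_bmult(1)[OF bt(1) s1(1)] null_bmult(2)[OF bs(4) t1(1)])
  ultimately have n01: "null (M01 c)" by simp
  have "M10 c = (\<lambda>n. (M10 s n * M00 t n + M11 s n * M10 t n) - (M10 t n * M00 s n + M11 t n * M10 s n))"
    unfolding c_def by (simp add: fun_eq_iff M_diff M_mul)
  moreover have "null (\<lambda>n. (M10 s n * M00 t n + M11 s n * M10 t n) - (M10 t n * M00 s n + M11 t n * M10 s n))"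
    by (intro null_diff null_add null_bmult(2)[OF bt(1) s1(2)] null_bmult(1)[OF bs(4) t1(2)]
        null_bmult(2)[OF bs(1) t1(2)] null_bmult(1)[OF bt(4) s1(2)])
  ultimately have n10: "null (M10 c)" by simp
  have "allnull c" unfolding allnull_def using n00 n01 n10 n11 by simp
  hence "tz c" by (rule allnull_tz)
  moreover have "tbounded c (2 * (Ks * Kt) + 2 * (Kt * Ks))"
    unfolding c_def by (rule tb_diff[OF tb_mul[OF sb tb] tb_mul[OF tb sb]])
  ultimately have "compact_op (blk c)" using tz_comp by blast
  thus "compact_op (op_diff (S \<circ> T) (T \<circ> S))" using eq by simp
qed

definition proj :: "nat set \<Rightarrow> nat \<Rightarrow> nat \<Rightarrow> complex" where
  "proj X = (\<lambda>m k. if m div 2 = k div 2 \<and> m div 2 \<in> X then pv m * pv k else 0)"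

lemma proj_tb: "tbounded (proj X) 1"
proof -
  have "cmod (pv m) \<le> 1" for m using cmod_ab by (simp add: pv_def)
  hence "cmod (proj X m k) \<le> 1" for m k
    by (auto simp: proj_def norm_mult intro: mult_le_one)
  thus ?thesis by (simp add: tbounded_def)
qed

lemma proj_bsupp: "bsupp X (proj X)"
  unfolding bsupp_iff proj_def by auto

lemma M_proj:
  "M00 (proj X) n = (if n \<in> X then 1 else 0)" "M01 (proj X) n = 0" "M10 (proj X) n = 0" "M11 (proj X) n = 0"
proof -
  have "(M00 (proj X) n = (if n \<in> X then 1 else 0)) \<and> M01 (proj X) n = 0 \<and> M10 (proj X) n = 0 \<and> M11 (proj X) n = 0"
  proof (cases "n \<in> X")
    case True
    have e: "proj X (2*n) (2*n) = a * a" "proj X (2*n) (Suc (2*n)) = a * b"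
      "proj X (Suc (2*n)) (2*n) = b * a" "proj X (Suc (2*n)) (Suc (2*n)) = b * b"
      using True by (simp_all add: proj_def)
    have "M00 (proj X) n = 1" unfolding Mdefs e using ab1 by algebra
    moreover have "M01 (proj X) n = 0" unfolding Mdefs e by algebra
    moreover have "M10 (proj X) n = 0" unfolding Mdefs e by algebra
    moreover have "M11 (proj X) n = 0" unfolding Mdefs e by algebra
    ultimately show ?thesis using True by simp
  next
    case False thus ?thesis using M_zero_out[OF proj_bsupp False] by simp
  qed
  thus "M00 (proj X) n = (if n \<in> X then 1 else 0)" "M01 (proj X) n = 0" "M10 (proj X) n = 0" "M11 (proj X) n = 0"
    by auto
qed

lemma proj_DK: "blk (proj X) \<in> DK X al"
proof (rule DK_intro[OF proj_tb proj_bsupp])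
  have "M01 (proj X) = (\<lambda>n. 0)" "M10 (proj X) = (\<lambda>n. 0)" by (simp_all add: fun_eq_iff M_proj)
  thus "offnull (proj X)" unfolding offnull_def by (simp add: null_zero)
qed

lemma DK_max:
  assumes B: "cstar_subalg B" "almost_commutative B" "DK X al \<subseteq> B" "B \<subseteq> A0 X"
  shows "B = DK X al"
proof
  show "B \<subseteq> DK X al"
  proof
    fix T assume TB: "T \<in> B"
    have TA: "T \<in> A0 X" using TB B(4) by blast
    obtain K where T1: "T = blk (ent T)" "tbounded (ent T) K" "bsupp X (ent T)" by (rule A0_repr[OF TA])
    define t where "t = ent T"
    define p where "p = proj X"
    have tb: "tbounded t K" and bst: "bsupp X t" using T1 unfolding t_def by auto
    have PB: "blk p \<in> B" using proj_DK B(3) unfolding p_def by blast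
    have "almost_commute T (blk p)" using B(2) TB PB unfolding almost_commutative_def by blast
    hence comp: "compact_op (op_diff (T \<circ> blk p) (blk p \<circ> T))" unfolding almost_commute_def .
    define c where "c = tdiff (tmul t p) (tmul p t)"
    have Teq: "T = blk t" unfolding t_def by (rule T1(1))
    have pb: "tbounded p 1" unfolding p_def by (rule proj_tb)
    have TP: "T \<circ> blk p = blk (tmul t p)" unfolding Teq by (rule blk_comp[OF pb])
    have PT: "blk p \<circ> T = blk (tmul p t)" unfolding Teq by (rule blk_comp[OF tb])
    have eq: "op_diff (T \<circ> blk p) (blk p \<circ> T) = blk c"
      unfolding TP PT c_def by (rule blk_diff)
    have "tbounded c (2 * (K * 1) + 2 * (1 * K))"
      unfolding c_def p_def by (rule tb_diff[OF tb_mul[OF tb proj_tb] tb_mul[OF proj_tb tb]])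
    hence "tz c" using comp eq comp_tz by metis
    hence an: "allnull c" by (rule tz_allnull)
    have e01: "M01 t = (\<lambda>n. (-1) * M01 c n)"
    proof
      fix n
      show "M01 t n = (-1) * M01 c n"
      proof (cases "n \<in> X")
        case True thus ?thesis unfolding c_def p_def by (simp add: M_diff M_mul M_proj)
      next
        case False thus ?thesis using M_zero_out[OF bst False] unfolding c_def p_def by (simp add: M_diff M_mul M_proj)
      qed
    qed
    have e10: "M10 t = (\<lambda>n. M10 c n)"
    proof
      fix n
      show "M10 t n = M10 c n"
      proof (cases "n \<in> X")
        case True thus ?thesis unfolding c_def p_def by (simp add: M_diff M_mul M_proj)
      next
        case False thus ?thesis using M_zero_out[OF bst False] unfolding c_def p_def by (simp add: M_diff M_mul M_proj)
      qed
    qed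
    have n1: "null (M01 c)" and n2: "null (\<lambda>n. M10 c n)" using an unfolding allnull_def by auto
    have "null (\<lambda>n. (-1) * M01 c n)" using null_cmult[OF n1] .
    hence "offnull t" unfolding offnull_def e01 e10 using n2 by blast
    thus "T \<in> DK X al" unfolding DK_char t_def using TA by simp
  qed
qed (rule B(3))

lemma main_masa: "almost_masa (A0 X) (DK X al)"
  unfolding almost_masa_def
proof (intro conjI allI impI)
  show "cstar_subalg (DK X al)" by (rule DK_cstar)
  show "DK X al \<subseteq> A0 X" using DK_char by blast
  show "almost_commutative (DK X al)" by (rule DK_ac)
  fix B assume "cstar_subalg B \<and> almost_commutative B \<and> DK X al \<subseteq> B \<and> B \<subseteq> A0 X"
  thus "B = DK X al" using DK_max by blast
qed

end

theorem lemma4p8: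
  fixes X :: "nat set" and \<alpha> :: real
  assumes "71/72 < \<alpha>" and "\<alpha> \<le> 1"
  shows "almost_masa (A0 X) (DK X \<alpha>)"
proof -
  interpret blkctx \<alpha> using assms by unfold_locales auto
  show ?thesis by (rule main_masa)
qed


end
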